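(* Let $k\ge1$. Every Motzkin $k$-diagram $d$ can be written as a product $d=r\,t\,\ell$ (with coefficient $1$) of a diagram $r$ spanning $\mathsf{RP}_k$, a Temperley–Lieb diagram $t$, and a diagram $\ell$ spanning $\mathsf{LP}_k$. Consequently $\mathsf M_k(x)=\mathsf{RP}_k\,\mathsf{TL}_k(x)\,\mathsf{LP}_k$. Moreover $\mathsf{RP}_k$ is generated as a unital algebra by $r_1,\dots,r_{k-1},p_1,\dots,p_k$ and $\mathsf{LP}_k$ by $\ell_1,\dots,\ell_{k-1},p_1,\dots,p_k$.
   Context: Let $\mathbb K$ be a commutative ring with 1 and $x\in\mathbb K$. A Motzkin $k$-diagram consists of two rows of $k$ vertices, a top row $1,\dots,k$ and a bottom row $1',\dots,k'$ (each listed left to right), together with a set of edges, each joining two distinct vertices, such that every vertex lies on at most one edge and the edges are planar (they can be drawn inside the rectangle spanned by the vertices without crossings). An edge joining a top vertex to a bottom vertex is vertical, an edge joining two vertices of the same row is horizontal. $\mathsf M_k(x)$ is the free $\mathbb K$-module with basis the Motzkin $k$-diagrams, with product: place $d_1$ above $d_2$, identifying the bottom vertices of $d_1$ with the top vertices of $d_2$; let $d_3$ be the diagram on the top row of $d_1$ and bottom row of $d_2$ in which two vertices are joined iff connected by a path in the stacked graph, and $\kappa(d_1,d_2)$ the number of closed loops in the middle row; then $d_1d_2=x^{\kappa(d_1,d_2)}d_3$. A Temperley–Lieb diagram is a Motzkin $k$-diagram in which every vertex lies on an edge; $\mathsf{TL}_k(x)$ is their span. $\mathsf{RP}_k$ is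 the span of the Motzkin diagrams with no horizontal edges in which every vertical edge joins a top vertex $i$ to a bottom vertex $j'$ with $i\ge j$; $\mathsf{LP}_k$ is the span of those with no horizontal edges and every vertical edge $i$—$j'$ satisfying $i\le j$. The diagrams $r_i,\ell_i$ ($1\le i<k$): $r_i$ has vertical edges $j$—$j'$ for $j\ne i,i+1$ and the edge $(i+1)$—$i'$; $\ell_i$ has vertical edges $j$—$j'$ for $j\ne i,i+1$ and the edge $i$—$(i+1)'$. For $1\le j\le k$, $p_j$ is the diagram with vertical edges $m$—$m'$ for all $m\ne j$ and vertices $j,j'$ isolated. *)

theory Defs
  imports Main
begin

text \<open>Vertices of a k-diagram: top vertex T i (i.e. i) and bottom vertex B i (i.e. i').\<close>
datatype vtx = T nat | B nat

text \<open>A diagram is a set of edges; an edge is a two-element set of vertices.\<close>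
type_synonym diagram = "vtx set set"

definition verts :: "nat \<Rightarrow> vtx set" where
  "verts k = {T i | i. 1 \<le> i \<and> i \<le> k} \<union> {B i | i. 1 \<le> i \<and> i \<le> k}"

text \<open>Position of a vertex when walking around the boundary of the rectangle:
  top row 1..k left to right, then bottom row k'..1' right to left.\<close>
fun bpos :: "nat \<Rightarrow> vtx \<Rightarrow> nat" where
  "bpos k (T i) = i"
| "bpos k (B i) = 2 * k + 1 - i"

definition is_edge :: "nat \<Rightarrow> vtx set \<Rightarrow> bool" where
  "is_edge k e \<longleftrightarrow> (\<exists>u v. e = {u, v} \<and> u \<noteq> v \<and> u \<in> verts k \<and> v \<in> verts k)"

text \<open>Planarity: no two edges cross (w.r.t. the cyclic boundary order).\<close>
definition noncrossing :: "nat \<Rightarrow> diagram \<Rightarrow> bool" where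
  "noncrossing k d \<longleftrightarrow>
     (\<forall>e1\<in>d. \<forall>e2\<in>d. \<forall>a b c e. e1 = {a, b} \<and> e2 = {c, e} \<longrightarrow>
        \<not> (bpos k a < bpos k c \<and> bpos k c < bpos k b \<and> bpos k b < bpos k e))"

definition motzkin :: "nat \<Rightarrow> diagram \<Rightarrow> bool" where
  "motzkin k d \<longleftrightarrow>
     (\<forall>e\<in>d. is_edge k e) \<and>
     (\<forall>e1\<in>d. \<forall>e2\<in>d. e1 \<inter> e2 \<noteq> {} \<longrightarrow> e1 = e2) \<and>
     noncrossing k d"

definition covered :: "diagram \<Rightarrow> vtx \<Rightarrow> bool" where
  "covered d v \<longleftrightarrow> (\<exists>e\<in>d. v \<in> e)"

definition tl_diagram :: "nat \<Rightarrow> diagram \<Rightarrow> bool" where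
  "tl_diagram k d \<longleftrightarrow> motzkin k d \<and> (\<forall>v\<in>verts k. covered d v)"

definition rp_diagram :: "nat \<Rightarrow> diagram \<Rightarrow> bool" where
  "rp_diagram k d \<longleftrightarrow> motzkin k d \<and> (\<forall>e\<in>d. \<exists>i j. e = {T i, B j} \<and> i \<ge> j)"

definition lp_diagram :: "nat \<Rightarrow> diagram \<Rightarrow> bool" where
  "lp_diagram k d \<longleftrightarrow> motzkin k d \<and> (\<forall>e\<in>d. \<exists>i j. e = {T i, B j} \<and> i \<le> j)"

datatype vtx3 = Up nat | Mid nat | Dn nat

fun emb1 :: "vtx \<Rightarrow> vtx3" where
  "emb1 (T i) = Up i" | "emb1 (B i) = Mid i"

fun emb2 :: "vtx \<Rightarrow> vtx3" where
  "emb2 (T i) = Mid i" | "emb2 (B i) = Dn i"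

fun embo :: "vtx \<Rightarrow> vtx3" where
  "embo (T i) = Up i" | "embo (B i) = Dn i"

text \<open>Adjacency in the stacked graph (edges of d1 and d2 are kept separate,
  so double edges in the middle row are counted correctly as loops).\<close>
definition stack_adj :: "diagram \<Rightarrow> diagram \<Rightarrow> (vtx3 \<times> vtx3) set" where
  "stack_adj d1 d2 =
     {(emb1 a, emb1 b) | a b. {a, b} \<in> d1 \<and> a \<noteq> b} \<union>
     {(emb2 a, emb2 b) | a b. {a, b} \<in> d2 \<and> a \<noteq> b}"

definition stack_conn :: "diagram \<Rightarrow> diagram \<Rightarrow> (vtx3 \<times> vtx3) set" where
  "stack_conn d1 d2 = (stack_adj d1 d2)\<^sup>*"

definition compose :: "diagram \<Rightarrow> diagram \<Rightarrow> diagram" where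
  "compose d1 d2 = {{u, v} | u v. u \<noteq> v \<and> (embo u, embo v) \<in> stack_conn d1 d2}"

text \<open>Closed loops: connected components lying entirely in the middle row in which
  every vertex has degree 2 (i.e. is met by an edge of d1 and by an edge of d2).\<close>
definition loops :: "diagram \<Rightarrow> diagram \<Rightarrow> vtx3 set set" where
  "loops d1 d2 =
     {C. \<exists>i. C = stack_conn d1 d2 `` {Mid i} \<and>
            (\<forall>w\<in>C. \<exists>j. w = Mid j \<and> covered d1 (B j) \<and> covered d2 (T j))}"

definition kappa :: "diagram \<Rightarrow> diagram \<Rightarrow> nat" where
  "kappa d1 d2 = card (loops d1 d2)"

text \<open>Elements of M_k(x) are coefficient functions on diagrams supported on Motzkin k-diagrams.\<close>

definition Mot :: "nat \<Rightarrow> diagram set" where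
  "Mot k = {d. motzkin k d}"

definition basis :: "diagram \<Rightarrow> diagram \<Rightarrow> 'a::comm_ring_1" where
  "basis d = (\<lambda>e. if e = d then 1 else 0)"

definition mmult :: "nat \<Rightarrow> 'a::comm_ring_1 \<Rightarrow> (diagram \<Rightarrow> 'a) \<Rightarrow> (diagram \<Rightarrow> 'a) \<Rightarrow> (diagram \<Rightarrow> 'a)" where
  "mmult k x f g = (\<lambda>d. \<Sum>p\<in>{(d1, d2). d1 \<in> Mot k \<and> d2 \<in> Mot k \<and> compose d1 d2 = d}.
        f (fst p) * g (snd p) * x ^ kappa (fst p) (snd p))"

definition supported :: "(diagram \<Rightarrow> bool) \<Rightarrow> (diagram \<Rightarrow> 'a::zero) set" where
  "supported P = {f. \<forall>d. f d \<noteq> 0 \<longrightarrow> P d}"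

definition Mk :: "nat \<Rightarrow> (diagram \<Rightarrow> 'a::comm_ring_1) set" where
  "Mk k = supported (motzkin k)"

definition TLk :: "nat \<Rightarrow> (diagram \<Rightarrow> 'a::comm_ring_1) set" where
  "TLk k = supported (tl_diagram k)"

definition RPk :: "nat \<Rightarrow> (diagram \<Rightarrow> 'a::comm_ring_1) set" where
  "RPk k = supported (rp_diagram k)"

definition LPk :: "nat \<Rightarrow> (diagram \<Rightarrow> 'a::comm_ring_1) set" where
  "LPk k = supported (lp_diagram k)"

inductive_set lspan :: "(diagram \<Rightarrow> 'a::comm_ring_1) set \<Rightarrow> (diagram \<Rightarrow> 'a) set"
  for S where
  zero: "(\<lambda>_. 0) \<in> lspan S"
| gen: "f \<in> S \<Longrightarrow> f \<in> lspan S"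
| add: "f \<in> lspan S \<Longrightarrow> g \<in> lspan S \<Longrightarrow> (\<lambda>d. f d + g d) \<in> lspan S"
| smul: "f \<in> lspan S \<Longrightarrow> (\<lambda>d. c * f d) \<in> lspan S"

definition triple_prod :: "nat \<Rightarrow> 'a::comm_ring_1 \<Rightarrow> (diagram \<Rightarrow> 'a) set \<Rightarrow> (diagram \<Rightarrow> 'a) set
    \<Rightarrow> (diagram \<Rightarrow> 'a) set \<Rightarrow> (diagram \<Rightarrow> 'a) set" where
  "triple_prod k x SA SB SC =
     lspan {mmult k x (mmult k x a b) c | a b c. a \<in> SA \<and> b \<in> SB \<and> c \<in> SC}"

definition idd :: "nat \<Rightarrow> diagram" where
  "idd k = {{T j, B j} | j. 1 \<le> j \<and> j \<le> k}"

inductive_set alg_gen :: "nat \<Rightarrow> 'a::comm_ring_1 \<Rightarrow> (diagram \<Rightarrow> 'a) set \<Rightarrow> (diagram \<Rightarrow> 'a) set"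
  for k x S where
  one: "basis (idd k) \<in> alg_gen k x S"
| gen: "f \<in> S \<Longrightarrow> f \<in> alg_gen k x S"
| add: "f \<in> alg_gen k x S \<Longrightarrow> g \<in> alg_gen k x S \<Longrightarrow> (\<lambda>d. f d + g d) \<in> alg_gen k x S"
| smul: "f \<in> alg_gen k x S \<Longrightarrow> (\<lambda>d. c * f d) \<in> alg_gen k x S"
| mult: "f \<in> alg_gen k x S \<Longrightarrow> g \<in> alg_gen k x S \<Longrightarrow> mmult k x f g \<in> alg_gen k x S"

definition r_diag :: "nat \<Rightarrow> nat \<Rightarrow> diagram" where
  "r_diag k i = {{T j, B j} | j. 1 \<le> j \<and> j \<le> k \<and> j \<noteq> i \<and> j \<noteq> i + 1} \<union> {{T (i + 1), B i}}"

definition l_diag :: "nat \<Rightarrow> nat \<Rightarrow> diagram" where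
  "l_diag k i = {{T j, B j} | j. 1 \<le> j \<and> j \<le> k \<and> j \<noteq> i \<and> j \<noteq> i + 1} \<union> {{T i, B (i + 1)}}"

definition p_diag :: "nat \<Rightarrow> nat \<Rightarrow> diagram" where
  "p_diag k j = {{T m, B m} | m. 1 \<le> m \<and> m \<le> k \<and> m \<noteq> j}"

end

theory Submission
  imports Defs
begin


lemma verts_T[simp]: "T i \<in> verts k \<longleftrightarrow> 1 \<le> i \<and> i \<le> k"
  by (auto simp: verts_def)
lemma verts_B[simp]: "B i \<in> verts k \<longleftrightarrow> 1 \<le> i \<and> i \<le> k"
  by (auto simp: verts_def)

lemma motzkin_edge: "motzkin k d \<Longrightarrow> E \<in> d \<Longrightarrow> \<exists>u v. E = {u,v} \<and> u \<noteq> v \<and> u \<in> verts k \<and> v \<in> verts k"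
  by (auto simp: motzkin_def is_edge_def)

lemma motzkin_disj: "motzkin k d \<Longrightarrow> E1 \<in> d \<Longrightarrow> E2 \<in> d \<Longrightarrow> w \<in> E1 \<Longrightarrow> w \<in> E2 \<Longrightarrow> E1 = E2"
  unfolding motzkin_def by blast

lemma motzkin_nc: "motzkin k d \<Longrightarrow> {a,b} \<in> d \<Longrightarrow> {c,e} \<in> d \<Longrightarrow> bpos k a < bpos k c
   \<Longrightarrow> bpos k c < bpos k b \<Longrightarrow> bpos k b < bpos k e \<Longrightarrow> False"
proof -
  assume m: "motzkin k d" and h: "{a,b} \<in> d" "{c,e} \<in> d" "bpos k a < bpos k c"
   "bpos k c < bpos k b" "bpos k b < bpos k e"
  from m have "noncrossing k d" by (simp add: motzkin_def)
  note nc = this[unfolded noncrossing_def, rule_format, of "{a,b}" "{c,e}" a b c e]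
  show False using nc h by blast
qed

lemma motzkin_verts: "motzkin k d \<Longrightarrow> E \<in> d \<Longrightarrow> w \<in> E \<Longrightarrow> w \<in> verts k"
  using motzkin_edge by blast

lemma doubleton_neq: "{a,b} \<in> d \<Longrightarrow> motzkin k d \<Longrightarrow> a \<noteq> b"
proof
  assume "{a,b} \<in> d" "motzkin k d" "a = b"
  then obtain u v where "{a} = {u,v}" "u \<noteq> v" using motzkin_edge[of k d "{a,b}"] by auto
  then have "u \<in> {a}" "v \<in> {a}" by (metis insertI1, metis insertI1 insert_commute)
  then show False using \<open>u \<noteq> v\<close> by simp
qed

lemma verts_cases: "v \<in> verts k \<Longrightarrow> (\<exists>i. v = T i \<and> 1 \<le> i \<and> i \<le> k) \<or> (\<exists>i. v = B i \<and> 1 \<le> i \<and> i \<le> k)"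
  by (cases v) auto

lemma bpos_T_lt_B: "T i \<in> verts k \<Longrightarrow> B j \<in> verts k \<Longrightarrow> bpos k (T i) < bpos k (B j)"
  by auto

definition vertical :: "diagram \<Rightarrow> bool" where
  "vertical d \<longleftrightarrow> (\<forall>e\<in>d. \<exists>i j. e = {T i, B j})"

lemma TB_uniq1: "motzkin k d \<Longrightarrow> {T i, B j} \<in> d \<Longrightarrow> {T i, B j'} \<in> d \<Longrightarrow> j = j'"
  using motzkin_disj[of k d "{T i, B j}" "{T i, B j'}" "T i"] by (auto simp: doubleton_eq_iff)

lemma TB_uniq2: "motzkin k d \<Longrightarrow> {T i, B j} \<in> d \<Longrightarrow> {T i', B j} \<in> d \<Longrightarrow> i = i'"
  using motzkin_disj[of k d "{T i, B j}" "{T i', B j}" "B j"] by (auto simp: doubleton_eq_iff)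

lemma vert_mono: assumes "motzkin k d" "{T i1, B j1} \<in> d" "{T i2, B j2} \<in> d" "i1 < i2"
  shows "j1 < j2"
proof (rule ccontr)
  assume "\<not> j1 < j2"
  moreover have "j1 \<noteq> j2" using TB_uniq2[OF assms(1,2)] assms(3,4) by auto
  ultimately have "j2 < j1" by auto
  have v: "i2 \<le> k" "j1 \<le> k" using motzkin_verts[OF assms(1) assms(3), of "T i2"] motzkin_verts[OF assms(1) assms(2), of "B j1"] by auto
  have "bpos k (T i1) < bpos k (T i2)" "bpos k (T i2) < bpos k (B j1)" "bpos k (B j1) < bpos k (B j2)"
    using \<open>j2 < j1\<close> v assms(4) by simp_all
  then show False using motzkin_nc[OF assms(1) assms(2) assms(3)] by blast
qed

lemma vert_mono_iff: assumes "motzkin k d" "{T i1, B j1} \<in> d" "{T i2, B j2} \<in> d"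
  shows "i1 < i2 \<longleftrightarrow> j1 < j2"
proof
  assume "i1 < i2" then show "j1 < j2" using vert_mono[OF assms] by blast
next
  assume a: "j1 < j2"
  show "i1 < i2"
  proof (rule ccontr)
    assume "\<not> i1 < i2"
    then have "i1 = i2 \<or> i2 < i1" by auto
    then show False
    proof
      assume "i1 = i2" then show False using TB_uniq1[OF assms(1,2)] assms(3) a by auto
    next
      assume "i2 < i1" then show False using vert_mono[OF assms(1,3,2)] a by auto
    qed
  qed
qed


definition R2 :: "diagram \<Rightarrow> vtx \<Rightarrow> vtx \<Rightarrow> bool" where
  "R2 d2 u w \<longleftrightarrow> (case u of T a \<Rightarrow> w = T a | B j' \<Rightarrow> (\<exists>j. w = B j \<and> {T j, B j'} \<in> d2))"

lemma R2_T[simp]: "R2 d2 (T a) w \<longleftrightarrow> w = T a" by (simp add: R2_def)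
lemma R2_B[simp]: "R2 d2 (B j') w \<longleftrightarrow> (\<exists>j. w = B j \<and> {T j, B j'} \<in> d2)" by (simp add: R2_def)
lemma R2_to_T[simp]: "R2 d2 u (T a) \<longleftrightarrow> u = T a" by (cases u) auto
lemma R2_to_B[simp]: "R2 d2 u (B j) \<longleftrightarrow> (\<exists>j'. u = B j' \<and> {T j, B j'} \<in> d2)" by (cases u) auto

definition rep2 :: "diagram \<Rightarrow> vtx3 \<Rightarrow> vtx \<Rightarrow> bool" where
  "rep2 d2 p w \<longleftrightarrow> (case p of Up a \<Rightarrow> w = T a | Mid j \<Rightarrow> w = B j | Dn j' \<Rightarrow> R2 d2 (B j') w)"

lemma rep2_emb1: "rep2 d2 (emb1 a) a" by (cases a) (auto simp: rep2_def)
lemma rep2_embo: "rep2 d2 (embo u) a \<longleftrightarrow> R2 d2 u a" by (cases u) (auto simp: rep2_def)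

lemma R2_func: "motzkin k d2 \<Longrightarrow> R2 d2 u a \<Longrightarrow> R2 d2 u b \<Longrightarrow> a = b"
  by (cases u) (auto dest: TB_uniq2)

lemma R2_inj: "motzkin k d2 \<Longrightarrow> R2 d2 u a \<Longrightarrow> R2 d2 v a \<Longrightarrow> u = v"
  by (cases a) (auto dest: TB_uniq1)

lemma rep2_func: "motzkin k d2 \<Longrightarrow> rep2 d2 p a \<Longrightarrow> rep2 d2 p b \<Longrightarrow> a = b"
  by (cases p) (auto simp: rep2_def dest: TB_uniq2)

lemma edge_share: "motzkin k d \<Longrightarrow> {a,b} \<in> d \<Longrightarrow> {b,c} \<in> d \<Longrightarrow> a = c"
proof -
  assume m: "motzkin k d" and h: "{a,b} \<in> d" "{b,c} \<in> d"
  then have "{a,b} = {b,c}" using motzkin_disj[OF m h(1) h(2), of b] by simp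
  moreover have "a \<noteq> b" using doubleton_neq[OF h(1) m] .
  ultimately show "a = c" by (metis doubleton_eq_iff)
qed

lemma vertical_cases: "vertical d \<Longrightarrow> {a,b} \<in> d \<Longrightarrow> (\<exists>i j. a = T i \<and> b = B j) \<or> (\<exists>i j. a = B j \<and> b = T i)"
  unfolding vertical_def by (fastforce simp: doubleton_eq_iff)

lemma adj_step2:
  assumes m2: "vertical d2" and pq: "(p,q) \<in> stack_adj d1 d2"
  shows "\<exists>a b. rep2 d2 p a \<and> rep2 d2 q b \<and> (a = b \<or> {a,b} \<in> d1)"
  using pq unfolding stack_adj_def
proof (elim UnE CollectE exE conjE)
  fix a b assume "(p,q) = (emb1 a, emb1 b)" "{a,b} \<in> d1"
  then show ?thesis using rep2_emb1 by blast
next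
  fix a b assume e: "(p,q) = (emb2 a, emb2 b)" "{a,b} \<in> d2"
  from vertical_cases[OF m2 e(2)] show ?thesis
  proof
    assume "\<exists>i j. a = T i \<and> b = B j"
    then obtain i j where "a = T i" "b = B j" by blast
    then show ?thesis using e by (auto simp: rep2_def)
  next
    assume "\<exists>i j. a = B j \<and> b = T i"
    then obtain i j where "a = B j" "b = T i" by blast
    then show ?thesis using e by (auto simp: rep2_def insert_commute)
  qed
qed

lemma conn_rep2:
  assumes m1: "motzkin k d1" and m2: "motzkin k d2" "vertical d2"
    and pq: "(p,q) \<in> stack_conn d1 d2"
  shows "p = q \<or> (\<exists>a b. rep2 d2 p a \<and> rep2 d2 q b \<and> (a = b \<or> {a,b} \<in> d1))"
  using pq unfolding stack_conn_def
proof (induction rule: rtrancl_induct)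
  case base then show ?case by simp
next
  case (step q r)
  obtain b c where bc: "rep2 d2 q b" "rep2 d2 r c" "b = c \<or> {b,c} \<in> d1"
    using adj_step2[OF m2(2) step(2)] by blast
  show ?case using step(3)
  proof
    assume "p = q" then show ?thesis using bc by blast
  next
    assume "\<exists>a b. rep2 d2 p a \<and> rep2 d2 q b \<and> (a = b \<or> {a,b} \<in> d1)"
    then obtain a b' where ab: "rep2 d2 p a" "rep2 d2 q b'" "a = b' \<or> {a,b'} \<in> d1" by blast
    have "b' = b" using rep2_func[OF m2(1) ab(2) bc(1)] .
    then have "a = c \<or> {a,c} \<in> d1" using ab(3) bc(3) edge_share[OF m1] by blast
    then show ?thesis using ab(1) bc(2) by blast
  qed
qed

lemma adj_emb1: "{a,b} \<in> d1 \<Longrightarrow> a \<noteq> b \<Longrightarrow> (emb1 a, emb1 b) \<in> stack_adj d1 d2"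
  unfolding stack_adj_def by blast
lemma adj_emb2: "{a,b} \<in> d2 \<Longrightarrow> a \<noteq> b \<Longrightarrow> (emb2 a, emb2 b) \<in> stack_adj d1 d2"
  unfolding stack_adj_def by blast

lemma R2_path:
  assumes "R2 d2 u a"
  shows "(embo u, emb1 a) \<in> stack_conn d1 d2 \<and> (emb1 a, embo u) \<in> stack_conn d1 d2"
proof (cases u)
  case (T i) then show ?thesis using assms by (simp add: stack_conn_def)
next
  case (B j')
  then obtain j where j: "a = B j" "{T j, B j'} \<in> d2" using assms by auto
  have "(emb2 (B j'), emb2 (T j)) \<in> stack_adj d1 d2" using j(2) by (intro adj_emb2) (auto simp: insert_commute)
  moreover have "(emb2 (T j), emb2 (B j')) \<in> stack_adj d1 d2" using j(2) by (intro adj_emb2) auto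
  ultimately show ?thesis using B j by (auto simp: stack_conn_def)
qed

lemma embo_inj: "embo u = embo v \<Longrightarrow> u = v"
  by (cases u; cases v) auto

lemma compose_right:
  assumes m1: "motzkin k d1" and m2: "motzkin k d2" "vertical d2"
  shows "compose d1 d2 = {{u,v} | u v. u \<noteq> v \<and> (\<exists>a b. R2 d2 u a \<and> R2 d2 v b \<and> {a,b} \<in> d1)}"
proof -
  have "(embo u, embo v) \<in> stack_conn d1 d2 \<longleftrightarrow> (\<exists>a b. R2 d2 u a \<and> R2 d2 v b \<and> {a,b} \<in> d1)"
    if "u \<noteq> v" for u v
  proof
    assume c: "(embo u, embo v) \<in> stack_conn d1 d2"
    from conn_rep2[OF m1 m2 c] that embo_inj
    obtain a b where ab: "R2 d2 u a" "R2 d2 v b" "a = b \<or> {a,b} \<in> d1"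
      unfolding rep2_embo by blast
    have "a \<noteq> b" using R2_inj[OF m2(1) ab(1)] ab(2) that by blast
    then show "\<exists>a b. R2 d2 u a \<and> R2 d2 v b \<and> {a,b} \<in> d1" using ab by blast
  next
    assume "\<exists>a b. R2 d2 u a \<and> R2 d2 v b \<and> {a,b} \<in> d1"
    then obtain a b where ab: "R2 d2 u a" "R2 d2 v b" "{a,b} \<in> d1" by blast
    have "(emb1 a, emb1 b) \<in> stack_adj d1 d2" using ab(3) doubleton_neq[OF ab(3) m1] by (rule adj_emb1)
    then have "(emb1 a, emb1 b) \<in> stack_conn d1 d2" by (simp add: stack_conn_def)
    moreover have "(embo u, emb1 a) \<in> stack_conn d1 d2" using R2_path[OF ab(1), of d1] by blast
    moreover have "(emb1 b, embo v) \<in> stack_conn d1 d2" using R2_path[OF ab(2), of d1] by blast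
    ultimately show "(embo u, embo v) \<in> stack_conn d1 d2"
      unfolding stack_conn_def by (meson rtrancl_trans)
  qed
  note eq = this
  show ?thesis unfolding compose_def
  proof (rule Collect_cong)
    fix x
    show "(\<exists>u v. x = {u, v} \<and> u \<noteq> v \<and> (embo u, embo v) \<in> stack_conn d1 d2) \<longleftrightarrow>
          (\<exists>u v. x = {u, v} \<and> u \<noteq> v \<and> (\<exists>a b. R2 d2 u a \<and> R2 d2 v b \<and> {a, b} \<in> d1))"
      using eq by (metis (no_types, lifting))
  qed
qed

lemma kappa_right:
  assumes "vertical d2"
  shows "kappa d1 d2 = 0"
proof -
  have "loops d1 d2 = {}"
  proof (rule ccontr)
    assume "loops d1 d2 \<noteq> {}"
    then obtain C i where C: "C = stack_conn d1 d2 `` {Mid i}"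
      "\<forall>w\<in>C. \<exists>j. w = Mid j \<and> covered d1 (B j) \<and> covered d2 (T j)"
      unfolding loops_def by blast
    have "Mid i \<in> C" using C(1) by (simp add: stack_conn_def)
    then have "covered d2 (T i)" using C(2) by auto
    then obtain e where e: "e \<in> d2" "T i \<in> e" unfolding covered_def by blast
    then obtain i' j where "e = {T i', B j}" using assms unfolding vertical_def by blast
    then have ej: "{T i, B j} \<in> d2" using e by auto
    have "(emb2 (T i), emb2 (B j)) \<in> stack_adj d1 d2" using ej by (intro adj_emb2) auto
    then have "Dn j \<in> C" using C(1) by (auto simp: stack_conn_def)
    then show False using C(2) by auto
  qed
  then show ?thesis by (simp add: kappa_def)
qed


definition pre :: "(vtx \<Rightarrow> vtx \<Rightarrow> bool) \<Rightarrow> vtx set \<Rightarrow> vtx set" where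
  "pre R E = {x. \<exists>y\<in>E. R x y}"

lemma pair_to_pre:
  assumes m: "motzkin k d"
    and F: "\<And>x a b. R x a \<Longrightarrow> R x b \<Longrightarrow> a = b"
    and I: "\<And>x y a. R x a \<Longrightarrow> R y a \<Longrightarrow> x = y"
  shows "{{u,v} | u v. u \<noteq> v \<and> (\<exists>a b. R u a \<and> R v b \<and> {a,b} \<in> d)}
       = {pre R E | E. E \<in> d \<and> (\<forall>y\<in>E. \<exists>x. R x y)}"
proof (intro set_eqI iffI)
  fix e assume "e \<in> {{u,v} | u v. u \<noteq> v \<and> (\<exists>a b. R u a \<and> R v b \<and> {a,b} \<in> d)}"
  then obtain u v a b where h: "e = {u,v}" "R u a" "R v b" "{a,b} \<in> d" by blast
  have "pre R {a,b} = {u,v}"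
    unfolding pre_def using h(2,3) I by blast
  moreover have "\<forall>y\<in>{a,b}. \<exists>x. R x y" using h by blast
  ultimately show "e \<in> {pre R E | E. E \<in> d \<and> (\<forall>y\<in>E. \<exists>x. R x y)}" using h by blast
next
  fix e assume "e \<in> {pre R E | E. E \<in> d \<and> (\<forall>y\<in>E. \<exists>x. R x y)}"
  then obtain E where E: "e = pre R E" "E \<in> d" "\<forall>y\<in>E. \<exists>x. R x y" by blast
  obtain a b where ab: "E = {a,b}" "a \<noteq> b" using motzkin_edge[OF m E(2)] by blast
  obtain u v where uv: "R u a" "R v b" using E(3) ab by blast
  have "u \<noteq> v" using F uv ab(2) by blast
  moreover have "e = {u,v}" unfolding E(1) pre_def ab(1) using uv I by blast
  ultimately show "e \<in> {{u,v} | u v. u \<noteq> v \<and> (\<exists>a b. R u a \<and> R v b \<and> {a,b} \<in> d)}"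
    using uv E(2) ab(1) by blast
qed

lemma two_elem: "E = {p,q} \<Longrightarrow> a \<in> E \<Longrightarrow> b \<in> E \<Longrightarrow> a \<noteq> b \<Longrightarrow> E = {a,b}"
  by auto

lemma motzkin_pull:
  fixes R :: "vtx \<Rightarrow> vtx \<Rightarrow> bool"
  assumes m: "motzkin k d"
    and F: "\<And>x a b. R x a \<Longrightarrow> R x b \<Longrightarrow> a = b"
    and I: "\<And>x y a. R x a \<Longrightarrow> R y a \<Longrightarrow> x = y"
    and V: "\<And>x a. R x a \<Longrightarrow> a \<in> verts k \<Longrightarrow> x \<in> verts k"
    and O: "\<And>x y a b. R x a \<Longrightarrow> R y b \<Longrightarrow> x \<in> verts k \<Longrightarrow> y \<in> verts k \<Longrightarrow> a \<in> verts k
             \<Longrightarrow> b \<in> verts k \<Longrightarrow> bpos k x < bpos k y \<Longrightarrow> bpos k a < bpos k b"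
  shows "motzkin k {{u,v} | u v. u \<noteq> v \<and> (\<exists>a b. R u a \<and> R v b \<and> {a,b} \<in> d)}"
    (is "motzkin k ?D")
proof -
  have D: "?D = {pre R E | E. E \<in> d \<and> (\<forall>y\<in>E. \<exists>x. R x y)}" by (rule pair_to_pre[OF m F I])
  have mem: "\<exists>y. R w y \<and> y \<in> E \<and> y \<in> verts k \<and> w \<in> verts k" if hE: "E \<in> d" "w \<in> pre R E" for w E
  proof -
    obtain y where "y \<in> E" "R w y" using hE(2) unfolding pre_def by blast
    moreover have "y \<in> verts k" using motzkin_verts[OF m hE(1) \<open>y \<in> E\<close>] .
    ultimately show ?thesis using V by blast
  qed
  have ie: "\<forall>e\<in>?D. is_edge k e"
  proof
    fix e assume "e \<in> ?D"
    then obtain u v a b where h: "e = {u,v}" "u \<noteq> v" "R u a" "R v b" "{a,b} \<in> d" by blast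
    have "a \<in> verts k" "b \<in> verts k" using motzkin_verts[OF m h(5)] by auto
    then show "is_edge k e" unfolding is_edge_def using h V by blast
  qed
  have dj: "\<forall>e1\<in>?D. \<forall>e2\<in>?D. e1 \<inter> e2 \<noteq> {} \<longrightarrow> e1 = e2"
  proof (intro ballI impI)
    fix e1 e2 assume e: "e1 \<in> ?D" "e2 \<in> ?D" "e1 \<inter> e2 \<noteq> {}"
    obtain E1 where E1: "e1 = pre R E1" "E1 \<in> d" using e(1) unfolding D by blast
    obtain E2 where E2: "e2 = pre R E2" "E2 \<in> d" using e(2) unfolding D by blast
    obtain w where w: "w \<in> e1" "w \<in> e2" using e(3) by blast
    obtain y1 where y1: "R w y1" "y1 \<in> E1" using mem[OF E1(2)] w(1) E1(1) by blast
    obtain y2 where y2: "R w y2" "y2 \<in> E2" using mem[OF E2(2)] w(2) E2(1) by blast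
    have "y1 = y2" using F y1(1) y2(1) .
    then have "E1 = E2" using motzkin_disj[OF m E1(2) E2(2) y1(2)] y2(2) by simp
    then show "e1 = e2" using E1 E2 by simp
  qed
  have nc: "noncrossing k ?D" unfolding noncrossing_def
  proof (intro ballI allI impI notI)
    fix e1 e2 a b c e
    assume e: "e1 \<in> ?D" "e2 \<in> ?D" "e1 = {a, b} \<and> e2 = {c, e}"
      and cr: "bpos k a < bpos k c \<and> bpos k c < bpos k b \<and> bpos k b < bpos k e"
    obtain E1 where E1: "e1 = pre R E1" "E1 \<in> d" using e(1) unfolding D by blast
    obtain E2 where E2: "e2 = pre R E2" "E2 \<in> d" using e(2) unfolding D by blast
    obtain a' where a': "R a a'" "a' \<in> E1" "a' \<in> verts k" "a \<in> verts k" using mem[OF E1(2), of a] E1(1) e(3) by blast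
    obtain b' where b': "R b b'" "b' \<in> E1" "b' \<in> verts k" "b \<in> verts k" using mem[OF E1(2), of b] E1(1) e(3) by blast
    obtain c' where c': "R c c'" "c' \<in> E2" "c' \<in> verts k" "c \<in> verts k" using mem[OF E2(2), of c] E2(1) e(3) by blast
    obtain e' where e': "R e e'" "e' \<in> E2" "e' \<in> verts k" "e \<in> verts k" using mem[OF E2(2), of e] E2(1) e(3) by blast
    have "a \<noteq> b" "c \<noteq> e" using cr by auto
    then have "a' \<noteq> b'" "c' \<noteq> e'" using I a' b' c' e' by blast+
    obtain p q where "E1 = {p,q}" using motzkin_edge[OF m E1(2)] by blast
    then have "E1 = {a',b'}" using two_elem a'(2) b'(2) \<open>a' \<noteq> b'\<close> by blast
    obtain p q where "E2 = {p,q}" using motzkin_edge[OF m E2(2)] by blast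
    then have "E2 = {c',e'}" using two_elem c'(2) e'(2) \<open>c' \<noteq> e'\<close> by blast
    have "bpos k a' < bpos k c'" using O[OF a'(1) c'(1)] a' c' cr by blast
    moreover have "bpos k c' < bpos k b'" using O[OF c'(1) b'(1)] b' c' cr by blast
    moreover have "bpos k b' < bpos k e'" using O[OF b'(1) e'(1)] b' e' cr by blast
    ultimately show False using motzkin_nc[OF m] E2(2) E1(2) \<open>E1 = {a',b'}\<close> \<open>E2 = {c',e'}\<close> by blast
  qed
  show ?thesis unfolding motzkin_def using ie dj nc by blast
qed


lemma edge_share': "motzkin k d \<Longrightarrow> {a,b} \<in> d \<Longrightarrow> {b,c} \<in> d \<Longrightarrow> a = c"
proof -
  assume m: "motzkin k d" and h: "{a,b} \<in> d" "{b,c} \<in> d"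
  then have "{a,b} = {b,c}" using motzkin_disj[OF m h(1) h(2), of b] by simp
  moreover have "a \<noteq> b" using doubleton_neq[OF h(1) m] .
  ultimately show "a = c" by (metis doubleton_eq_iff)
qed

lemma vertical_cases': "vertical d \<Longrightarrow> {a,b} \<in> d \<Longrightarrow> (\<exists>i j. a = T i \<and> b = B j) \<or> (\<exists>i j. a = B j \<and> b = T i)"
  unfolding vertical_def by (fastforce simp: doubleton_eq_iff)

definition R1 :: "diagram \<Rightarrow> vtx \<Rightarrow> vtx \<Rightarrow> bool" where
  "R1 d1 u w \<longleftrightarrow> (case u of T i \<Rightarrow> (\<exists>j. w = T j \<and> {T i, B j} \<in> d1) | B l \<Rightarrow> w = B l)"

lemma R1_T[simp]: "R1 d1 (T i) w \<longleftrightarrow> (\<exists>j. w = T j \<and> {T i, B j} \<in> d1)" by (simp add: R1_def)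
lemma R1_B[simp]: "R1 d1 (B l) w \<longleftrightarrow> w = B l" by (simp add: R1_def)
lemma R1_to_T[simp]: "R1 d1 u (T j) \<longleftrightarrow> (\<exists>i. u = T i \<and> {T i, B j} \<in> d1)" by (cases u) auto
lemma R1_to_B[simp]: "R1 d1 u (B l) \<longleftrightarrow> u = B l" by (cases u) auto

definition rep1 :: "diagram \<Rightarrow> vtx3 \<Rightarrow> vtx \<Rightarrow> bool" where
  "rep1 d1 p w \<longleftrightarrow> (case p of Up i \<Rightarrow> R1 d1 (T i) w | Mid j \<Rightarrow> w = T j | Dn l \<Rightarrow> w = B l)"

lemma rep1_emb2: "rep1 d1 (emb2 a) a" by (cases a) (auto simp: rep1_def)
lemma rep1_embo: "rep1 d1 (embo u) a \<longleftrightarrow> R1 d1 u a" by (cases u) (auto simp: rep1_def)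

lemma R1_func: "motzkin k d1 \<Longrightarrow> R1 d1 u a \<Longrightarrow> R1 d1 u b \<Longrightarrow> a = b"
  by (cases u) (auto dest: TB_uniq1)

lemma R1_inj: "motzkin k d1 \<Longrightarrow> R1 d1 u a \<Longrightarrow> R1 d1 v a \<Longrightarrow> u = v"
  by (cases a) (auto dest: TB_uniq2)

lemma rep1_func: "motzkin k d1 \<Longrightarrow> rep1 d1 p a \<Longrightarrow> rep1 d1 p b \<Longrightarrow> a = b"
  by (cases p) (auto simp: rep1_def dest: TB_uniq1)

lemma adj_step1:
  assumes m1: "vertical d1" and pq: "(p,q) \<in> stack_adj d1 d2"
  shows "\<exists>a b. rep1 d1 p a \<and> rep1 d1 q b \<and> (a = b \<or> {a,b} \<in> d2)"
  using pq unfolding stack_adj_def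
proof (elim UnE CollectE exE conjE)
  fix a b assume "(p,q) = (emb2 a, emb2 b)" "{a,b} \<in> d2"
  then show ?thesis using rep1_emb2 by blast
next
  fix a b assume e: "(p,q) = (emb1 a, emb1 b)" "{a,b} \<in> d1"
  from vertical_cases'[OF m1 e(2)] show ?thesis
  proof
    assume "\<exists>i j. a = T i \<and> b = B j"
    then obtain i j where "a = T i" "b = B j" by blast
    then show ?thesis using e by (auto simp: rep1_def)
  next
    assume "\<exists>i j. a = B j \<and> b = T i"
    then obtain i j where "a = B j" "b = T i" by blast
    then show ?thesis using e by (auto simp: rep1_def insert_commute)
  qed
qed

lemma conn_rep1:
  assumes m1: "motzkin k d1" "vertical d1" and m2: "motzkin k d2"
    and pq: "(p,q) \<in> stack_conn d1 d2"
  shows "p = q \<or> (\<exists>a b. rep1 d1 p a \<and> rep1 d1 q b \<and> (a = b \<or> {a,b} \<in> d2))"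
  using pq unfolding stack_conn_def
proof (induction rule: rtrancl_induct)
  case base then show ?case by simp
next
  case (step q r)
  obtain b c where bc: "rep1 d1 q b" "rep1 d1 r c" "b = c \<or> {b,c} \<in> d2"
    using adj_step1[OF m1(2) step(2)] by blast
  show ?case using step(3)
  proof
    assume "p = q" then show ?thesis using bc by blast
  next
    assume "\<exists>a b. rep1 d1 p a \<and> rep1 d1 q b \<and> (a = b \<or> {a,b} \<in> d2)"
    then obtain a b' where ab: "rep1 d1 p a" "rep1 d1 q b'" "a = b' \<or> {a,b'} \<in> d2" by blast
    have "b' = b" using rep1_func[OF m1(1) ab(2) bc(1)] .
    then have "a = c \<or> {a,c} \<in> d2" using ab(3) bc(3) edge_share'[OF m2] by blast
    then show ?thesis using ab(1) bc(2) by blast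
  qed
qed

lemma adj_emb1': "{a,b} \<in> d1 \<Longrightarrow> a \<noteq> b \<Longrightarrow> (emb1 a, emb1 b) \<in> stack_adj d1 d2"
  unfolding stack_adj_def by blast
lemma adj_emb2': "{a,b} \<in> d2 \<Longrightarrow> a \<noteq> b \<Longrightarrow> (emb2 a, emb2 b) \<in> stack_adj d1 d2"
  unfolding stack_adj_def by blast

lemma R1_path:
  assumes "R1 d1 u a"
  shows "(embo u, emb2 a) \<in> stack_conn d1 d2 \<and> (emb2 a, embo u) \<in> stack_conn d1 d2"
proof (cases u)
  case (B l) then show ?thesis using assms by (simp add: stack_conn_def)
next
  case (T i)
  then obtain j where j: "a = T j" "{T i, B j} \<in> d1" using assms by auto
  have "(emb1 (B j), emb1 (T i)) \<in> stack_adj d1 d2" using j(2) by (intro adj_emb1') (auto simp: insert_commute)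
  moreover have "(emb1 (T i), emb1 (B j)) \<in> stack_adj d1 d2" using j(2) by (intro adj_emb1') auto
  ultimately show ?thesis using T j by (auto simp: stack_conn_def)
qed

lemma embo_inj': "embo u = embo v \<Longrightarrow> u = v"
  by (cases u; cases v) auto

lemma compose_left:
  assumes m1: "motzkin k d1" "vertical d1" and m2: "motzkin k d2"
  shows "compose d1 d2 = {{u,v} | u v. u \<noteq> v \<and> (\<exists>a b. R1 d1 u a \<and> R1 d1 v b \<and> {a,b} \<in> d2)}"
proof -
  have "(embo u, embo v) \<in> stack_conn d1 d2 \<longleftrightarrow> (\<exists>a b. R1 d1 u a \<and> R1 d1 v b \<and> {a,b} \<in> d2)"
    if "u \<noteq> v" for u v
  proof
    assume c: "(embo u, embo v) \<in> stack_conn d1 d2"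
    from conn_rep1[OF m1 m2 c] that embo_inj'
    obtain a b where ab: "R1 d1 u a" "R1 d1 v b" "a = b \<or> {a,b} \<in> d2"
      unfolding rep1_embo by blast
    have "a \<noteq> b" using R1_inj[OF m1(1) ab(1)] ab(2) that by blast
    then show "\<exists>a b. R1 d1 u a \<and> R1 d1 v b \<and> {a,b} \<in> d2" using ab by blast
  next
    assume "\<exists>a b. R1 d1 u a \<and> R1 d1 v b \<and> {a,b} \<in> d2"
    then obtain a b where ab: "R1 d1 u a" "R1 d1 v b" "{a,b} \<in> d2" by blast
    have "(emb2 a, emb2 b) \<in> stack_adj d1 d2" using ab(3) doubleton_neq[OF ab(3) m2] by (rule adj_emb2')
    then have "(emb2 a, emb2 b) \<in> stack_conn d1 d2" by (simp add: stack_conn_def)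
    moreover have "(embo u, emb2 a) \<in> stack_conn d1 d2" using R1_path[OF ab(1), of d2] by blast
    moreover have "(emb2 b, embo v) \<in> stack_conn d1 d2" using R1_path[OF ab(2), of d2] by blast
    ultimately show "(embo u, embo v) \<in> stack_conn d1 d2"
      unfolding stack_conn_def by (meson rtrancl_trans)
  qed
  note eq = this
  show ?thesis unfolding compose_def
  proof (rule Collect_cong)
    fix x
    show "(\<exists>u v. x = {u, v} \<and> u \<noteq> v \<and> (embo u, embo v) \<in> stack_conn d1 d2) \<longleftrightarrow>
          (\<exists>u v. x = {u, v} \<and> u \<noteq> v \<and> (\<exists>a b. R1 d1 u a \<and> R1 d1 v b \<and> {a, b} \<in> d2))"
      using eq by (metis (no_types, lifting))
  qed
qed

lemma kappa_left:
  assumes "vertical d1"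
  shows "kappa d1 d2 = 0"
proof -
  have "loops d1 d2 = {}"
  proof (rule ccontr)
    assume "loops d1 d2 \<noteq> {}"
    then obtain C i where C: "C = stack_conn d1 d2 `` {Mid i}"
      "\<forall>w\<in>C. \<exists>j. w = Mid j \<and> covered d1 (B j) \<and> covered d2 (T j)"
      unfolding loops_def by blast
    have "Mid i \<in> C" using C(1) by (simp add: stack_conn_def)
    then have "covered d1 (B i)" using C(2) by auto
    then obtain e where e: "e \<in> d1" "B i \<in> e" unfolding covered_def by blast
    then obtain i' j where "e = {T i', B j}" using assms unfolding vertical_def by blast
    then have ej: "{B i, T i'} \<in> d1" using e by (auto simp: insert_commute)
    have "(emb1 (B i), emb1 (T i')) \<in> stack_adj d1 d2" using ej by (intro adj_emb1') auto
    then have "Up i' \<in> C" using C(1) by (auto simp: stack_conn_def)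
    then show False using C(2) by auto
  qed
  then show ?thesis by (simp add: kappa_def)
qed


lemma bpos_B_lt_iff: "j \<le> k \<Longrightarrow> j' \<le> k \<Longrightarrow> bpos k (B j) < bpos k (B j') \<longleftrightarrow> j' < j"
  by auto

lemma compose_right_motzkin:
  assumes m1: "motzkin k d1" and m2: "motzkin k d2" "vertical d2"
  shows "motzkin k (compose d1 d2)"
  unfolding compose_right[OF m1 m2]
proof (rule motzkin_pull[OF m1])
  show "\<And>x a b. R2 d2 x a \<Longrightarrow> R2 d2 x b \<Longrightarrow> a = b" using R2_func[OF m2(1)] by blast
  show "\<And>x y a. R2 d2 x a \<Longrightarrow> R2 d2 y a \<Longrightarrow> x = y" using R2_inj[OF m2(1)] by blast
  show "\<And>x a. R2 d2 x a \<Longrightarrow> a \<in> verts k \<Longrightarrow> x \<in> verts k"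
  proof -
    fix x a assume h: "R2 d2 x a" "a \<in> verts k"
    show "x \<in> verts k"
    proof (cases x)
      case (T i) then show ?thesis using h by simp
    next
      case (B j') then obtain j where "{T j, B j'} \<in> d2" using h by auto
      then show ?thesis using motzkin_verts[OF m2(1), of "{T j, B j'}" "B j'"] B by simp
    qed
  qed
  show "\<And>x y a b. R2 d2 x a \<Longrightarrow> R2 d2 y b \<Longrightarrow> x \<in> verts k \<Longrightarrow> y \<in> verts k \<Longrightarrow> a \<in> verts k
             \<Longrightarrow> b \<in> verts k \<Longrightarrow> bpos k x < bpos k y \<Longrightarrow> bpos k a < bpos k b"
  proof -
    fix x y a b assume h: "R2 d2 x a" "R2 d2 y b" "x \<in> verts k" "y \<in> verts k" "a \<in> verts k"
      "b \<in> verts k" "bpos k x < bpos k y"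
    show "bpos k a < bpos k b"
    proof (cases x)
      case (T i) note x = this
      then show ?thesis
      proof (cases y)
        case (T i') then show ?thesis using h x by simp
      next
        case (B j') then obtain j where "b = B j" using h by auto
        then show ?thesis using h x by auto
      qed
    next
      case (B j1') note x = this
      then obtain j1 where j1: "a = B j1" "{T j1, B j1'} \<in> d2" using h by auto
      show ?thesis
      proof (cases y)
        case (T i') then show ?thesis using h x by auto
      next
        case (B j2') then obtain j2 where j2: "b = B j2" "{T j2, B j2'} \<in> d2" using h by auto
        have "j2' < j1'" using h(3,4,7) x B by auto
        then have "j2 < j1" using vert_mono_iff[OF m2(1) j2(2) j1(2)] by simp
        then show ?thesis using h(5,6) j1 j2 by auto
      qed
    qed
  qed
qed

lemma compose_left_motzkin:
  assumes m1: "motzkin k d1" "vertical d1" and m2: "motzkin k d2"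
  shows "motzkin k (compose d1 d2)"
  unfolding compose_left[OF m1 m2]
proof (rule motzkin_pull[OF m2])
  show "\<And>x a b. R1 d1 x a \<Longrightarrow> R1 d1 x b \<Longrightarrow> a = b" using R1_func[OF m1(1)] by blast
  show "\<And>x y a. R1 d1 x a \<Longrightarrow> R1 d1 y a \<Longrightarrow> x = y" using R1_inj[OF m1(1)] by blast
  show "\<And>x a. R1 d1 x a \<Longrightarrow> a \<in> verts k \<Longrightarrow> x \<in> verts k"
  proof -
    fix x a assume h: "R1 d1 x a" "a \<in> verts k"
    show "x \<in> verts k"
    proof (cases x)
      case (B i) then show ?thesis using h by simp
    next
      case (T i) then obtain j where "{T i, B j} \<in> d1" using h by auto
      then show ?thesis using motzkin_verts[OF m1(1), of "{T i, B j}" "T i"] T by simp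
    qed
  qed
  show "\<And>x y a b. R1 d1 x a \<Longrightarrow> R1 d1 y b \<Longrightarrow> x \<in> verts k \<Longrightarrow> y \<in> verts k \<Longrightarrow> a \<in> verts k
             \<Longrightarrow> b \<in> verts k \<Longrightarrow> bpos k x < bpos k y \<Longrightarrow> bpos k a < bpos k b"
  proof -
    fix x y a b assume h: "R1 d1 x a" "R1 d1 y b" "x \<in> verts k" "y \<in> verts k" "a \<in> verts k"
      "b \<in> verts k" "bpos k x < bpos k y"
    show "bpos k a < bpos k b"
    proof (cases x)
      case (B l) note x = this
      then show ?thesis
      proof (cases y)
        case (B l') then show ?thesis using h x by simp
      next
        case (T i) then show ?thesis using h x by auto
      qed
    next
      case (T i1) note x = this
      then obtain j1 where j1: "a = T j1" "{T i1, B j1} \<in> d1" using h by auto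
      show ?thesis
      proof (cases y)
        case (B l) then show ?thesis using h x j1 by auto
      next
        case (T i2) then obtain j2 where j2: "b = T j2" "{T i2, B j2} \<in> d1" using h by auto
        have "i1 < i2" using h(7) x T by auto
        then have "j1 < j2" using vert_mono_iff[OF m1(1) j1(2) j2(2)] by simp
        then show ?thesis using j1 j2 by auto
      qed
    qed
  qed
qed

lemma vcomp:
  assumes m1: "motzkin k d1" "vertical d1" and m2: "motzkin k d2" "vertical d2"
  shows "compose d1 d2 = {{T i, B l} | i l. \<exists>j. {T i, B j} \<in> d1 \<and> {T j, B l} \<in> d2}"
  unfolding compose_left[OF m1 m2(1)]
proof (intro set_eqI iffI)
  fix e assume "e \<in> {{u,v} | u v. u \<noteq> v \<and> (\<exists>a b. R1 d1 u a \<and> R1 d1 v b \<and> {a,b} \<in> d2)}"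
  then obtain u v a b where h: "e = {u,v}" "R1 d1 u a" "R1 d1 v b" "{a,b} \<in> d2" by blast
  from vertical_cases[OF m2(2) h(4)]
  show "e \<in> {{T i, B l} | i l. \<exists>j. {T i, B j} \<in> d1 \<and> {T j, B l} \<in> d2}"
  proof
    assume "\<exists>i j. a = T i \<and> b = B j"
    then obtain i j where ij: "a = T i" "b = B j" by blast
    then obtain i' where "u = T i'" "{T i', B i} \<in> d1" using h(2) by auto
    moreover have "v = B j" using h(3) ij by simp
    ultimately show ?thesis using h(1,4) ij by blast
  next
    assume "\<exists>i j. a = B j \<and> b = T i"
    then obtain i j where ij: "a = B j" "b = T i" by blast
    then obtain i' where "v = T i'" "{T i', B i} \<in> d1" using h(3) by auto
    moreover have "u = B j" using h(2) ij by simp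
    moreover have "{T i, B j} \<in> d2" using h(4) ij by (simp add: insert_commute)
    moreover have "e = {T i', B j}" using h(1) calculation by (simp add: insert_commute)
    ultimately show ?thesis by blast
  qed
next
  fix e assume "e \<in> {{T i, B l} | i l. \<exists>j. {T i, B j} \<in> d1 \<and> {T j, B l} \<in> d2}"
  then obtain i l j where h: "e = {T i, B l}" "{T i, B j} \<in> d1" "{T j, B l} \<in> d2" by blast
  have "R1 d1 (T i) (T j)" "R1 d1 (B l) (B l)" using h by auto
  then show "e \<in> {{u,v} | u v. u \<noteq> v \<and> (\<exists>a b. R1 d1 u a \<and> R1 d1 v b \<and> {a,b} \<in> d2)}"
    using h by blast
qed

lemma vcomp_vertical:
  assumes m1: "motzkin k d1" "vertical d1" and m2: "motzkin k d2" "vertical d2"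
  shows "vertical (compose d1 d2)"
  unfolding vcomp[OF m1 m2] vertical_def by auto

lemma vert_ext:
  assumes v: "vertical d" "vertical e" and h: "\<And>i j. {T i, B j} \<in> d \<longleftrightarrow> {T i, B j} \<in> e"
  shows "d = e"
proof (intro set_eqI iffI)
  fix x assume "x \<in> d"
  then obtain i j where "x = {T i, B j}" using v(1) unfolding vertical_def by blast
  then show "x \<in> e" using h \<open>x \<in> d\<close> by simp
next
  fix x assume "x \<in> e"
  then obtain i j where "x = {T i, B j}" using v(2) unfolding vertical_def by blast
  then show "x \<in> d" using h \<open>x \<in> e\<close> by simp
qed


lemma finite_verts: "finite (verts k)"
proof -
  have "verts k = T ` {1..k} \<union> B ` {1..k}" unfolding verts_def by auto
  then show ?thesis by simp
qed

lemma finite_Mot: "finite (Mot k)"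
proof -
  have "Mot k \<subseteq> Pow (Pow (verts k))"
    unfolding Mot_def using motzkin_verts by blast
  then show ?thesis using finite_verts by (meson finite_Pow_iff finite_subset)
qed

lemma mmult_basis:
  assumes "motzkin k a" "motzkin k b"
  shows "mmult k x (basis a) (basis b) = (\<lambda>d. if d = compose a b then x ^ kappa a b else 0)"
proof
  fix d
  let ?S = "{(d1, d2). d1 \<in> Mot k \<and> d2 \<in> Mot k \<and> compose d1 d2 = d}"
  have fin: "finite ?S"
    by (rule finite_subset[of _ "Mot k \<times> Mot k"]) (auto simp: finite_Mot)
  have "mmult k x (basis a) (basis b) d = (\<Sum>p\<in>?S. if (a,b) = p then x ^ kappa a b else 0)"
    unfolding mmult_def by (rule sum.cong) (auto simp: basis_def)
  also have "\<dots> = (if (a,b) \<in> ?S then x ^ kappa a b else 0)"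
    using sum.delta'[OF fin, of "(a,b)" "\<lambda>_. x ^ kappa a b"] by simp
  also have "\<dots> = (if d = compose a b then x ^ kappa a b else 0)"
    using assms by (auto simp: Mot_def)
  finally show "mmult k x (basis a) (basis b) d = (if d = compose a b then x ^ kappa a b else 0)" .
qed

lemma mmult_basis0:
  assumes "motzkin k a" "motzkin k b" "kappa a b = 0"
  shows "mmult k x (basis a) (basis b) = basis (compose a b)"
  using mmult_basis[OF assms(1,2), of x] assms(3) by (auto simp: basis_def)

lemma mmult_nz:
  assumes "mmult k x f g d \<noteq> 0"
  shows "\<exists>d1 d2. motzkin k d1 \<and> motzkin k d2 \<and> compose d1 d2 = d \<and> f d1 \<noteq> 0 \<and> g d2 \<noteq> 0"
proof -
  obtain p where p: "p \<in> {(d1, d2). d1 \<in> Mot k \<and> d2 \<in> Mot k \<and> compose d1 d2 = d}"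
      "f (fst p) * g (snd p) * x ^ kappa (fst p) (snd p) \<noteq> 0"
    using assms unfolding mmult_def by (meson sum.neutral)
  then have "f (fst p) \<noteq> 0" "g (snd p) \<noteq> 0" by auto
  moreover obtain d1 d2 where "p = (d1,d2)" by (cases p)
  ultimately show ?thesis using p(1) by (auto simp: Mot_def)
qed

lemma lspan_sum:
  assumes "finite S" "\<And>d. d \<in> S \<Longrightarrow> g d \<in> lspan X"
  shows "(\<lambda>e. \<Sum>d\<in>S. c d * g d e) \<in> lspan X"
  using assms
proof (induction S rule: finite_induct)
  case empty then show ?case using lspan.zero by simp
next
  case (insert a S)
  have "(\<lambda>e. c a * g a e) \<in> lspan X" using insert by (intro lspan.smul) auto
  moreover have "(\<lambda>e. \<Sum>d\<in>S. c d * g d e) \<in> lspan X" using insert by auto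
  ultimately have "(\<lambda>e. c a * g a e + (\<Sum>d\<in>S. c d * g d e)) \<in> lspan X" by (rule lspan.add)
  then show ?case using insert by simp
qed

lemma alg_sum:
  assumes "finite S" "\<And>d. d \<in> S \<Longrightarrow> g d \<in> alg_gen k x X"
  shows "(\<lambda>e. \<Sum>d\<in>S. c d * g d e) \<in> alg_gen k x X"
  using assms
proof (induction S rule: finite_induct)
  case empty
  have "(\<lambda>e. 0 * basis (idd k) e) \<in> alg_gen k x X" by (intro alg_gen.smul alg_gen.one)
  then show ?case by simp
next
  case (insert a S)
  have "(\<lambda>e. c a * g a e) \<in> alg_gen k x X" using insert by (intro alg_gen.smul) auto
  moreover have "(\<lambda>e. \<Sum>d\<in>S. c d * g d e) \<in> alg_gen k x X" using insert by auto
  ultimately have "(\<lambda>e. c a * g a e + (\<Sum>d\<in>S. c d * g d e)) \<in> alg_gen k x X" by (rule alg_gen.add)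
  then show ?case using insert by simp
qed

lemma expand:
  assumes "finite S" "\<And>d. f d \<noteq> 0 \<Longrightarrow> d \<in> S"
  shows "f = (\<lambda>e. \<Sum>d\<in>S. f d * basis d e)"
proof
  fix e
  have "(\<Sum>d\<in>S. f d * basis d e) = (\<Sum>d\<in>S. if e = d then f e else 0)"
    by (rule sum.cong) (auto simp: basis_def)
  also have "\<dots> = (if e \<in> S then f e else 0)" using sum.delta'[OF assms(1), of e "\<lambda>_. f e"] by simp
  also have "\<dots> = f e" using assms(2) by auto
  finally show "f e = (\<Sum>d\<in>S. f d * basis d e)" by simp
qed


lemma TB_order: "{a,b} = {T i, B j} \<Longrightarrow> bpos k a < bpos k b \<Longrightarrow> i \<le> k \<Longrightarrow> j \<le> k \<Longrightarrow> a = T i \<and> b = B j"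
proof -
  assume h: "{a,b} = {T i, B j}" "bpos k a < bpos k b" "i \<le> k" "j \<le> k"
  then have "(a = T i \<and> b = B j) \<or> (a = B j \<and> b = T i)" by (simp add: doubleton_eq_iff)
  moreover have "\<not> (a = B j \<and> b = T i)"
  proof
    assume "a = B j \<and> b = T i"
    then have "2*k + 1 - j < i" using h(2) by simp
    then show False using h(3,4) by arith
  qed
  ultimately show ?thesis by blast
qed

lemma mk_vert_motzkin:
  assumes v: "vertical d"
    and r: "\<And>i j. {T i, B j} \<in> d \<Longrightarrow> 1 \<le> i \<and> i \<le> k \<and> 1 \<le> j \<and> j \<le> k"
    and mo: "\<And>i j i' j'. {T i, B j} \<in> d \<Longrightarrow> {T i', B j'} \<in> d \<Longrightarrow> (i < i' \<longleftrightarrow> j < j')"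
  shows "motzkin k d"
proof -
  have ie: "\<forall>e\<in>d. is_edge k e"
  proof
    fix e assume "e \<in> d"
    then obtain i j where e: "e = {T i, B j}" using v unfolding vertical_def by blast
    have "1 \<le> i \<and> i \<le> k \<and> 1 \<le> j \<and> j \<le> k" using r[of i j] e \<open>e \<in> d\<close> by simp
    then show "is_edge k e" unfolding is_edge_def e by (intro exI[of _ "T i"] exI[of _ "B j"]) simp
  qed
  have dj: "\<forall>e1\<in>d. \<forall>e2\<in>d. e1 \<inter> e2 \<noteq> {} \<longrightarrow> e1 = e2"
  proof (intro ballI impI)
    fix e1 e2 assume e: "e1 \<in> d" "e2 \<in> d" "e1 \<inter> e2 \<noteq> {}"
    obtain i j where e1: "e1 = {T i, B j}" using v e(1) unfolding vertical_def by blast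
    obtain i' j' where e2: "e2 = {T i', B j'}" using v e(2) unfolding vertical_def by blast
    have m1: "i < i' \<longleftrightarrow> j < j'" "i' < i \<longleftrightarrow> j' < j"
      using mo[of i j i' j'] mo[of i' j' i j] e(1,2) e1 e2 by simp_all
    obtain w where w: "w \<in> {T i, B j}" "w \<in> {T i', B j'}" using e(3) e1 e2 by blast
    have "i = i' \<or> j = j'" using w by auto
    then have "i = i' \<and> j = j'" using m1 by auto
    then show "e1 = e2" using e1 e2 by simp
  qed
  have nc: "noncrossing k d" unfolding noncrossing_def
  proof (intro ballI allI impI notI)
    fix e1 e2 a b c e
    assume e: "e1 \<in> d" "e2 \<in> d" "e1 = {a, b} \<and> e2 = {c, e}"
      and cr: "bpos k a < bpos k c \<and> bpos k c < bpos k b \<and> bpos k b < bpos k e"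
    obtain i j where e1: "e1 = {T i, B j}" using v e(1) unfolding vertical_def by blast
    obtain i' j' where e2: "e2 = {T i', B j'}" using v e(2) unfolding vertical_def by blast
    have rr: "1 \<le> i \<and> i \<le> k \<and> 1 \<le> j \<and> j \<le> k" "1 \<le> i' \<and> i' \<le> k \<and> 1 \<le> j' \<and> j' \<le> k"
      using r[of i j] r[of i' j'] e e1 e2 by auto
    have ab: "{a,b} = {T i, B j}" "{c,e} = {T i', B j'}" using e e1 e2 by auto
    have cr1: "bpos k a < bpos k b" "bpos k c < bpos k e" using cr by auto
    have "a = T i \<and> b = B j" using TB_order[OF ab(1) cr1(1)] rr by blast
    moreover have "c = T i' \<and> e = B j'" using TB_order[OF ab(2) cr1(2)] rr by blast
    ultimately have "i < i'" "Suc (2*k) - j < Suc (2*k) - j'" using cr by auto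
    then have "i < i'" "j' < j" using rr by arith+
    then show False using mo[of i j i' j'] e(1,2) e1 e2 by simp
  qed
  show ?thesis unfolding motzkin_def using ie dj nc by blast
qed

lemma rp_motzkin: "rp_diagram k d \<Longrightarrow> motzkin k d" by (simp add: rp_diagram_def)
lemma rp_vertical: "rp_diagram k d \<Longrightarrow> vertical d" unfolding rp_diagram_def vertical_def by blast
lemma lp_motzkin: "lp_diagram k d \<Longrightarrow> motzkin k d" by (simp add: lp_diagram_def)
lemma lp_vertical: "lp_diagram k d \<Longrightarrow> vertical d" unfolding lp_diagram_def vertical_def by blast

lemma rp_ij: "rp_diagram k d \<Longrightarrow> {T i, B j} \<in> d \<Longrightarrow> j \<le> i"
proof -
  assume "rp_diagram k d" "{T i, B j} \<in> d"
  then obtain i' j' where "{T i, B j} = {T i', B j'}" "j' \<le> i'" unfolding rp_diagram_def by blast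
  then show "j \<le> i" by (simp add: doubleton_eq_iff)
qed
lemma lp_ij: "lp_diagram k d \<Longrightarrow> {T i, B j} \<in> d \<Longrightarrow> i \<le> j"
proof -
  assume "lp_diagram k d" "{T i, B j} \<in> d"
  then obtain i' j' where "{T i, B j} = {T i', B j'}" "i' \<le> j'" unfolding lp_diagram_def by blast
  then show "i \<le> j" by (simp add: doubleton_eq_iff)
qed

lemma rp_intro: assumes "motzkin k d" "vertical d" "\<And>i j. {T i, B j} \<in> d \<Longrightarrow> j \<le> i" shows "rp_diagram k d"
  unfolding rp_diagram_def
proof (intro conjI ballI)
  show "motzkin k d" by fact
  fix e assume "e \<in> d"
  then obtain i j where "e = {T i, B j}" using assms(2) unfolding vertical_def by blast
  then show "\<exists>i j. e = {T i, B j} \<and> j \<le> i" using assms(3) \<open>e \<in> d\<close> by blast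
qed
lemma lp_intro: assumes "motzkin k d" "vertical d" "\<And>i j. {T i, B j} \<in> d \<Longrightarrow> i \<le> j" shows "lp_diagram k d"
  unfolding lp_diagram_def
proof (intro conjI ballI)
  show "motzkin k d" by fact
  fix e assume "e \<in> d"
  then obtain i j where "e = {T i, B j}" using assms(2) unfolding vertical_def by blast
  then show "\<exists>i j. e = {T i, B j} \<and> i \<le> j" using assms(3) \<open>e \<in> d\<close> by blast
qed

lemma rp_compose: assumes "rp_diagram k d1" "rp_diagram k d2" shows "rp_diagram k (compose d1 d2)"
proof (rule rp_intro)
  show "motzkin k (compose d1 d2)"
    using compose_left_motzkin rp_motzkin rp_vertical assms by blast
  show "vertical (compose d1 d2)"
    using vcomp_vertical rp_motzkin rp_vertical assms by blast
  fix i j assume "{T i, B j} \<in> compose d1 d2"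
  then obtain i' l' c where h: "{T i, B j} = {T i', B l'}" "{T i', B c} \<in> d1" "{T c, B l'} \<in> d2"
    unfolding vcomp[OF rp_motzkin[OF assms(1)] rp_vertical[OF assms(1)] rp_motzkin[OF assms(2)] rp_vertical[OF assms(2)]]
    by blast
  then have "i = i'" "j = l'" by (auto simp: doubleton_eq_iff)
  then show "j \<le> i" using rp_ij[OF assms(1) h(2)] rp_ij[OF assms(2) h(3)] by simp
qed

lemma lp_compose: assumes "lp_diagram k d1" "lp_diagram k d2" shows "lp_diagram k (compose d1 d2)"
proof (rule lp_intro)
  show "motzkin k (compose d1 d2)"
    using compose_left_motzkin lp_motzkin lp_vertical assms by blast
  show "vertical (compose d1 d2)"
    using vcomp_vertical lp_motzkin lp_vertical assms by blast
  fix i j assume "{T i, B j} \<in> compose d1 d2"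
  then obtain i' l' c where h: "{T i, B j} = {T i', B l'}" "{T i', B c} \<in> d1" "{T c, B l'} \<in> d2"
    unfolding vcomp[OF lp_motzkin[OF assms(1)] lp_vertical[OF assms(1)] lp_motzkin[OF assms(2)] lp_vertical[OF assms(2)]]
    by blast
  then have "i = i'" "j = l'" by (auto simp: doubleton_eq_iff)
  then show "i \<le> j" using lp_ij[OF assms(1) h(2)] lp_ij[OF assms(2) h(3)] by simp
qed

lemma idd_mem: "{T a, B b} \<in> idd k \<longleftrightarrow> a = b \<and> 1 \<le> a \<and> a \<le> k"
  by (auto simp: idd_def doubleton_eq_iff)
lemma idd_vertical: "vertical (idd k)" by (auto simp: idd_def vertical_def)
lemma r_mem: "{T a, B b} \<in> r_diag k m \<longleftrightarrow> (a = b \<and> 1 \<le> a \<and> a \<le> k \<and> a \<noteq> m \<and> a \<noteq> m + 1) \<or> (a = m + 1 \<and> b = m)"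
  by (auto simp: r_diag_def doubleton_eq_iff)
lemma r_vertical: "vertical (r_diag k m)" by (auto simp: r_diag_def vertical_def)
lemma l_mem: "{T a, B b} \<in> l_diag k m \<longleftrightarrow> (a = b \<and> 1 \<le> a \<and> a \<le> k \<and> a \<noteq> m \<and> a \<noteq> m + 1) \<or> (a = m \<and> b = m + 1)"
  by (auto simp: l_diag_def doubleton_eq_iff)
lemma l_vertical: "vertical (l_diag k m)" by (auto simp: l_diag_def vertical_def)
lemma p_mem: "{T a, B b} \<in> p_diag k m \<longleftrightarrow> a = b \<and> 1 \<le> a \<and> a \<le> k \<and> a \<noteq> m"
  by (auto simp: p_diag_def doubleton_eq_iff)
lemma p_vertical: "vertical (p_diag k m)" by (auto simp: p_diag_def vertical_def)

lemma idd_rp: "rp_diagram k (idd k)" and idd_lp: "lp_diagram k (idd k)"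
proof -
  have m: "motzkin k (idd k)" by (rule mk_vert_motzkin[OF idd_vertical]) (auto simp: idd_mem)
  show "rp_diagram k (idd k)" by (rule rp_intro[OF m idd_vertical]) (auto simp: idd_mem)
  show "lp_diagram k (idd k)" by (rule lp_intro[OF m idd_vertical]) (auto simp: idd_mem)
qed

lemma p_rp: "rp_diagram k (p_diag k m)" and p_lp: "lp_diagram k (p_diag k m)"
proof -
  have m: "motzkin k (p_diag k m)" by (rule mk_vert_motzkin[OF p_vertical]) (auto simp: p_mem)
  show "rp_diagram k (p_diag k m)" by (rule rp_intro[OF m p_vertical]) (auto simp: p_mem)
  show "lp_diagram k (p_diag k m)" by (rule lp_intro[OF m p_vertical]) (auto simp: p_mem)
qed

lemma r_rp: assumes "1 \<le> m" "m < k" shows "rp_diagram k (r_diag k m)"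
proof -
  have m: "motzkin k (r_diag k m)" by (rule mk_vert_motzkin[OF r_vertical]) (use assms in \<open>auto simp: r_mem\<close>)
  show "rp_diagram k (r_diag k m)" by (rule rp_intro[OF m r_vertical]) (auto simp: r_mem)
qed

lemma l_lp: assumes "1 \<le> m" "m < k" shows "lp_diagram k (l_diag k m)"
proof -
  have m: "motzkin k (l_diag k m)" by (rule mk_vert_motzkin[OF l_vertical]) (use assms in \<open>auto simp: l_mem\<close>)
  show "lp_diagram k (l_diag k m)" by (rule lp_intro[OF m l_vertical]) (auto simp: l_mem)
qed


definition vrel :: "diagram \<Rightarrow> (nat \<times> nat) set" where
  "vrel d = {(i,j). {T i, B j} \<in> d}"

lemma vrel_fin: assumes "motzkin k d" shows "finite (vrel d)"
proof -
  have "vrel d \<subseteq> {1..k} \<times> {1..k}"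
  proof
    fix p assume "p \<in> vrel d"
    then obtain i j where "p = (i,j)" "{T i, B j} \<in> d" unfolding vrel_def by blast
    then show "p \<in> {1..k} \<times> {1..k}"
      using motzkin_verts[OF assms, of "{T i, B j}" "T i"] motzkin_verts[OF assms, of "{T i, B j}" "B j"] by auto
  qed
  then show ?thesis by (rule finite_subset) simp
qed

lemma in_vrel[simp]: "(i,j) \<in> vrel d \<longleftrightarrow> {T i, B j} \<in> d" by (simp add: vrel_def)

definition rmeas :: "nat \<Rightarrow> diagram \<Rightarrow> nat" where
  "rmeas k d = (\<Sum>p\<in>vrel d. fst p - snd p) + card ({1..k} - fst ` vrel d)"

definition GR :: "nat \<Rightarrow> (diagram \<Rightarrow> 'a::comm_ring_1) set" where
  "GR k = {basis (r_diag k i) | i. 1 \<le> i \<and> i < k} \<union> {basis (p_diag k j) | j. 1 \<le> j \<and> j \<le> k}"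

lemma edge_range: "motzkin k d \<Longrightarrow> {T i, B j} \<in> d \<Longrightarrow> 1 \<le> i \<and> i \<le> k \<and> 1 \<le> j \<and> j \<le> k"
  using motzkin_verts[of k d "{T i, B j}" "T i"] motzkin_verts[of k d "{T i, B j}" "B j"] by auto

lemma vcomp_mem:
  assumes m1: "motzkin k d1" "vertical d1" and m2: "motzkin k d2" "vertical d2"
  shows "{T a, B b} \<in> compose d1 d2 \<longleftrightarrow> (\<exists>c. {T a, B c} \<in> d1 \<and> {T c, B b} \<in> d2)"
  unfolding vcomp[OF m1 m2] by (auto simp: doubleton_eq_iff)

lemma rp_step:
  assumes rp: "rp_diagram k d" and i0: "{T i0, B m} \<in> d" "m < i0"
    and nob: "\<And>i. {T i, B (m+1)} \<notin> d"
  defines "d' \<equiv> insert {T i0, B (m+1)} (d - {{T i0, B m}})"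
  shows "rp_diagram k d'" "compose d' (r_diag k m) = d" "rmeas k d' < rmeas k d"
    "1 \<le> m" "m < k"
proof -
  have m: "motzkin k d" and v: "vertical d" using rp rp_motzkin rp_vertical by auto
  have mem: "{T a, B b} \<in> d' \<longleftrightarrow> (a = i0 \<and> b = m + 1) \<or> ({T a, B b} \<in> d \<and> \<not> (a = i0 \<and> b = m))" for a b
    unfolding d'_def by (auto simp: doubleton_eq_iff)
  have vd': "vertical d'" using v unfolding d'_def vertical_def by blast
  have rng: "1 \<le> m" "i0 \<le> k" using edge_range[OF m i0(1)] by auto
  then show "1 \<le> m" "m < k" using i0(2) by auto
  have md': "motzkin k d'"
  proof (rule mk_vert_motzkin[OF vd'])
    fix i j assume "{T i, B j} \<in> d'"
    then show "1 \<le> i \<and> i \<le> k \<and> 1 \<le> j \<and> j \<le> k" using mem edge_range[OF m] rng i0(2) by auto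
  next
    have key: "a < i0 \<longleftrightarrow> b < m + 1" "i0 < a \<longleftrightarrow> m + 1 < b" if "{T a, B b} \<in> d" "\<not> (a = i0 \<and> b = m)" for a b
    proof -
      have "b \<noteq> m" using TB_uniq2[OF m that(1)] i0(1) that(2) by auto
      moreover have "b \<noteq> m + 1" using nob that(1) by auto
      moreover have "a < i0 \<longleftrightarrow> b < m" "i0 < a \<longleftrightarrow> m < b"
        using vert_mono_iff[OF m that(1) i0(1)] vert_mono_iff[OF m i0(1) that(1)] by auto
      ultimately show "a < i0 \<longleftrightarrow> b < m + 1" "i0 < a \<longleftrightarrow> m + 1 < b" by auto
    qed
    fix i j i' j' assume h: "{T i, B j} \<in> d'" "{T i', B j'} \<in> d'"
    show "i < i' \<longleftrightarrow> j < j'"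
    proof (cases "i = i0 \<and> j = m + 1")
      case True
      then show ?thesis
      proof (cases "i' = i0 \<and> j' = m + 1")
        case True then show ?thesis using \<open>i = i0 \<and> j = m + 1\<close> by simp
      next
        case False then have "{T i', B j'} \<in> d" "\<not> (i' = i0 \<and> j' = m)" using h(2) mem by auto
        then show ?thesis using key[of i' j'] True by simp
      qed
    next
      case False then have o: "{T i, B j} \<in> d" "\<not> (i = i0 \<and> j = m)" using h(1) mem by auto
      show ?thesis
      proof (cases "i' = i0 \<and> j' = m + 1")
        case True then show ?thesis using key[OF o] by simp
      next
        case False then have "{T i', B j'} \<in> d" using h(2) mem by auto
        then show ?thesis using vert_mono_iff[OF m o(1)] by simp
      qed
    qed
  qed
  show "rp_diagram k d'"
  proof (rule rp_intro[OF md' vd'])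
    fix i j assume "{T i, B j} \<in> d'"
    then show "j \<le> i" using mem rp_ij[OF rp] i0(2) by force
  qed
  have mr: "motzkin k (r_diag k m)" using r_rp[OF \<open>1 \<le> m\<close> \<open>m < k\<close>] rp_motzkin by blast
  show "compose d' (r_diag k m) = d"
  proof (rule vert_ext)
    show "vertical (compose d' (r_diag k m))" by (rule vcomp_vertical[OF md' vd' mr r_vertical])
    show "vertical d" by fact
    fix a b
    show "{T a, B b} \<in> compose d' (r_diag k m) \<longleftrightarrow> {T a, B b} \<in> d"
      unfolding vcomp_mem[OF md' vd' mr r_vertical] r_mem mem
    proof
      assume "\<exists>c. ((a = i0 \<and> c = m + 1) \<or> ({T a, B c} \<in> d \<and> \<not> (a = i0 \<and> c = m))) \<and>
               ((c = b \<and> 1 \<le> c \<and> c \<le> k \<and> c \<noteq> m \<and> c \<noteq> m + 1) \<or> (c = m + 1 \<and> b = m))"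
      then obtain c where c: "(a = i0 \<and> c = m + 1) \<or> ({T a, B c} \<in> d \<and> \<not> (a = i0 \<and> c = m))"
        "(c = b \<and> 1 \<le> c \<and> c \<le> k \<and> c \<noteq> m \<and> c \<noteq> m + 1) \<or> (c = m + 1 \<and> b = m)" by blast
      then show "{T a, B b} \<in> d" using nob i0(1) by auto
    next
      assume ab: "{T a, B b} \<in> d"
      show "\<exists>c. ((a = i0 \<and> c = m + 1) \<or> ({T a, B c} \<in> d \<and> \<not> (a = i0 \<and> c = m))) \<and>
               ((c = b \<and> 1 \<le> c \<and> c \<le> k \<and> c \<noteq> m \<and> c \<noteq> m + 1) \<or> (c = m + 1 \<and> b = m))"
      proof (cases "a = i0 \<and> b = m")
        case True then show ?thesis by blast
      next
        case False
        have "b \<noteq> m" using TB_uniq2[OF m ab] i0(1) False by auto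
        moreover have "b \<noteq> m + 1" using nob ab by auto
        moreover have "1 \<le> b \<and> b \<le> k" using edge_range[OF m ab] by auto
        ultimately show ?thesis using ab False by blast
      qed
    qed
  qed
  have vr: "vrel d' = insert (i0, m+1) (vrel d - {(i0, m)})"
    using mem by auto
  have fin: "finite (vrel d)" using vrel_fin[OF m] .
  have notin: "(i0, m+1) \<notin> vrel d - {(i0, m)}" using nob by auto
  have "fst ` vrel d' = fst ` vrel d"
  proof -
    have "fst ` vrel d' = insert i0 (fst ` (vrel d - {(i0, m)}))" unfolding vr by simp
    also have "\<dots> = fst ` insert (i0, m) (vrel d - {(i0, m)})" by (simp only: image_insert fst_conv)
    also have "insert (i0, m) (vrel d - {(i0, m)}) = vrel d" using i0(1) by (intro insert_Diff) simp
    finally show ?thesis .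
  qed
  moreover have "(\<Sum>p\<in>vrel d'. fst p - snd p) < (\<Sum>p\<in>vrel d. fst p - snd p)"
  proof -
    have "(\<Sum>p\<in>vrel d'. fst p - snd p) = (i0 - (m+1)) + (\<Sum>p\<in>vrel d - {(i0, m)}. fst p - snd p)"
      unfolding vr using fin notin by simp
    moreover have "(\<Sum>p\<in>vrel d. fst p - snd p) = (i0 - m) + (\<Sum>p\<in>vrel d - {(i0, m)}. fst p - snd p)"
      using sum.remove[OF fin, of "(i0,m)" "\<lambda>p. fst p - snd p"] i0(1) by simp
    ultimately show ?thesis using i0(2) by simp
  qed
  ultimately show "rmeas k d' < rmeas k d" unfolding rmeas_def by simp
qed


lemma rp_step2:
  assumes rp: "rp_diagram k d" and diag: "\<And>i j. {T i, B j} \<in> d \<Longrightarrow> i = j"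
    and j: "1 \<le> j" "j \<le> k" and nc: "\<And>b. {T j, B b} \<notin> d"
  defines "d' \<equiv> insert {T j, B j} d"
  shows "rp_diagram k d'" "compose d' (p_diag k j) = d" "rmeas k d' < rmeas k d"
proof -
  have m: "motzkin k d" and v: "vertical d" using rp rp_motzkin rp_vertical by auto
  have mem: "{T a, B b} \<in> d' \<longleftrightarrow> (a = j \<and> b = j) \<or> {T a, B b} \<in> d" for a b
    unfolding d'_def by (auto simp: doubleton_eq_iff)
  have nb: "{T a, B j} \<notin> d" for a using diag nc by blast
  have vd': "vertical d'" using v unfolding d'_def vertical_def by blast
  have diag': "a = b" if "{T a, B b} \<in> d'" for a b using that diag by (auto simp: mem)
  have md': "motzkin k d'"
  proof (rule mk_vert_motzkin[OF vd'])
    fix a b assume "{T a, B b} \<in> d'"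
    then show "1 \<le> a \<and> a \<le> k \<and> 1 \<le> b \<and> b \<le> k" using mem edge_range[OF m] j by auto
  next
    fix a b a' b' assume "{T a, B b} \<in> d'" "{T a', B b'} \<in> d'"
    then show "a < a' \<longleftrightarrow> b < b'" using diag' by blast
  qed
  show "rp_diagram k d'"
    by (rule rp_intro[OF md' vd']) (use diag' in blast)
  have mp: "motzkin k (p_diag k j)" using p_rp rp_motzkin by blast
  show "compose d' (p_diag k j) = d"
  proof (rule vert_ext)
    show "vertical (compose d' (p_diag k j))" by (rule vcomp_vertical[OF md' vd' mp p_vertical])
    show "vertical d" by fact
    fix a b
    show "{T a, B b} \<in> compose d' (p_diag k j) \<longleftrightarrow> {T a, B b} \<in> d"
      unfolding vcomp_mem[OF md' vd' mp p_vertical] p_mem mem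
      using nb edge_range[OF m] by auto
  qed
  have vr: "vrel d' = insert (j, j) (vrel d)" using mem by auto
  have fin: "finite (vrel d)" using vrel_fin[OF m] .
  have notin: "(j, j) \<notin> vrel d" using nc by auto
  have "(\<Sum>p\<in>vrel d'. fst p - snd p) = (\<Sum>p\<in>vrel d. fst p - snd p)"
    unfolding vr using fin notin by simp
  moreover have "card ({1..k} - fst ` vrel d') < card ({1..k} - fst ` vrel d)"
  proof -
    have "fst ` vrel d' = insert j (fst ` vrel d)" unfolding vr by simp
    moreover have "j \<notin> fst ` vrel d" using nc by auto
    ultimately have eq: "{1..k} - fst ` vrel d' = ({1..k} - fst ` vrel d) - {j}" by auto
    have jm: "j \<in> {1..k} - fst ` vrel d" using j \<open>j \<notin> fst ` vrel d\<close> by auto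
    show ?thesis unfolding eq by (rule card_Diff1_less[OF _ jm]) simp
  qed
  ultimately show "rmeas k d' < rmeas k d" unfolding rmeas_def by simp
qed

lemma diag_idd:
  assumes m: "motzkin k d" "vertical d" and diag: "\<And>i j. {T i, B j} \<in> d \<Longrightarrow> i = j"
    and cov: "\<And>j. 1 \<le> j \<Longrightarrow> j \<le> k \<Longrightarrow> \<exists>b. {T j, B b} \<in> d"
  shows "d = idd k"
proof (rule vert_ext[OF m(2) idd_vertical])
  fix a b
  show "{T a, B b} \<in> d \<longleftrightarrow> {T a, B b} \<in> idd k"
    unfolding idd_mem using cov diag edge_range[OF m(1)] by blast
qed

lemma rp_gen:
  assumes "rp_diagram k d"
  shows "basis d \<in> alg_gen k x (GR k)"
  using assms
proof (induction "rmeas k d" arbitrary: d rule: less_induct)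
  case less
  have m: "motzkin k d" and v: "vertical d" using less.prems rp_motzkin rp_vertical by auto
  show ?case
  proof (cases "\<exists>i j. {T i, B j} \<in> d \<and> j < i")
    case True
    let ?J = "{j. \<exists>i. {T i, B j} \<in> d \<and> j < i}"
    have finJ: "finite ?J" by (rule finite_subset[of _ "{..k}"]) (use edge_range[OF m] in auto)
    have neJ: "?J \<noteq> {}" using True by blast
    define mm where "mm = Max ?J"
    have "mm \<in> ?J" unfolding mm_def using Max_in[OF finJ neJ] .
    then obtain i0 where i0: "{T i0, B mm} \<in> d" "mm < i0" by blast
    have mx: "j \<le> mm" if "{T i, B j} \<in> d" "j < i" for i j
      unfolding mm_def using that finJ by (intro Max_ge) auto
    have nob: "{T i, B (mm+1)} \<notin> d" for i
    proof
      assume h: "{T i, B (mm+1)} \<in> d"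
      have "i0 < i" using vert_mono_iff[OF m i0(1) h] by simp
      then have "mm + 1 < i" using i0(2) by simp
      then show False using mx[OF h] by simp
    qed
    note st = rp_step[OF less.prems i0 nob]
    let ?d' = "insert {T i0, B (mm+1)} (d - {{T i0, B mm}})"
    have IH: "basis ?d' \<in> alg_gen k x (GR k)" using less.hyps[OF st(3) st(1)] .
    have g: "basis (r_diag k mm) \<in> alg_gen k x (GR k)"
      by (rule alg_gen.gen) (use st(4,5) in \<open>auto simp: GR_def\<close>)
    have "mmult k x (basis ?d') (basis (r_diag k mm)) = basis (compose ?d' (r_diag k mm))"
      by (rule mmult_basis0[OF rp_motzkin[OF st(1)] rp_motzkin[OF r_rp[OF st(4,5)]] kappa_left[OF rp_vertical[OF st(1)]]])
    then have "basis d = mmult k x (basis ?d') (basis (r_diag k mm))" using st(2) by simp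
    then show ?thesis using alg_gen.mult[OF IH g] by simp
  next
    case False
    then have diag: "\<And>i j. {T i, B j} \<in> d \<Longrightarrow> i = j" using rp_ij[OF less.prems] by force
    show ?thesis
    proof (cases "\<exists>j. 1 \<le> j \<and> j \<le> k \<and> (\<forall>b. {T j, B b} \<notin> d)")
      case True
      then obtain j where j: "1 \<le> j" "j \<le> k" "\<And>b. {T j, B b} \<notin> d" by blast
      note st = rp_step2[OF less.prems diag j]
      let ?d' = "insert {T j, B j} d"
      have IH: "basis ?d' \<in> alg_gen k x (GR k)" using less.hyps[OF st(3) st(1)] .
      have g: "basis (p_diag k j) \<in> alg_gen k x (GR k)"
        by (rule alg_gen.gen) (use j in \<open>auto simp: GR_def\<close>)
      have "mmult k x (basis ?d') (basis (p_diag k j)) = basis (compose ?d' (p_diag k j))"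
        by (rule mmult_basis0[OF rp_motzkin[OF st(1)] rp_motzkin[OF p_rp] kappa_left[OF rp_vertical[OF st(1)]]])
      then have "basis d = mmult k x (basis ?d') (basis (p_diag k j))" using st(2) by simp
      then show ?thesis using alg_gen.mult[OF IH g] by simp
    next
      case False
      then have "d = idd k" using diag_idd[OF m v diag] by blast
      then show ?thesis using alg_gen.one by simp
    qed
  qed
qed


definition rk :: "nat set \<Rightarrow> nat \<Rightarrow> nat" where
  "rk A a = card {x\<in>A. x < a} + 1"

lemma rk_mono: assumes "finite A" "a \<in> A" "a < a'" shows "rk A a < rk A a'"
proof -
  have "{x\<in>A. x < a} \<subset> {x\<in>A. x < a'}" using assms by auto
  then have "card {x\<in>A. x < a} < card {x\<in>A. x < a'}" using assms(1) by (intro psubset_card_mono) auto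
  then show ?thesis unfolding rk_def by simp
qed

lemma rk_mono_iff: assumes "finite A" "a \<in> A" "a' \<in> A" shows "rk A a < rk A a' \<longleftrightarrow> a < a'"
  using rk_mono[OF assms(1,2)] rk_mono[OF assms(1,3)]
  by (metis less_asym' linorder_neqE_nat)

lemma rk_inj: assumes "finite A" "a \<in> A" "a' \<in> A" "rk A a = rk A a'" shows "a = a'"
  using rk_mono_iff[OF assms(1,2,3)] rk_mono_iff[OF assms(1,3,2)] assms(4)
  by (metis linorder_neqE_nat less_irrefl)

lemma rk_le_card: assumes "finite A" "a \<in> A" shows "rk A a \<le> card A"
proof -
  have "{x\<in>A. x < a} \<subset> A" using assms by auto
  then have "card {x\<in>A. x < a} < card A" using assms(1) by (intro psubset_card_mono) auto
  then show ?thesis unfolding rk_def by simp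
qed

lemma rk_le_self: assumes "\<forall>x\<in>A. 1 \<le> x" "a \<in> A" shows "rk A a \<le> a"
proof -
  have "{x\<in>A. x < a} \<subseteq> {1..<a}" using assms by auto
  then have "card {x\<in>A. x < a} \<le> card {1..<a}" by (intro card_mono) auto
  then show ?thesis unfolding rk_def using assms by auto
qed

lemma rk_pos: "1 \<le> rk A a" by (simp add: rk_def)

lemma rk_image: assumes "finite A" shows "rk A ` A = {1..card A}"
proof -
  have sub: "rk A ` A \<subseteq> {1..card A}" using rk_le_card[OF assms] rk_pos by auto
  have "inj_on (rk A) A" unfolding inj_on_def using rk_inj[OF assms] by blast
  then have "card (rk A ` A) = card A" by (rule card_image)
  then show ?thesis using sub by (intro card_subset_eq) auto
qed

definition vp :: "nat \<Rightarrow> nat \<Rightarrow> vtx" where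
  "vp k p = (if p \<le> k then T p else B (2*k + 1 - p))"

lemma vp_bpos: "v \<in> verts k \<Longrightarrow> vp k (bpos k v) = v"
  by (cases v) (auto simp: vp_def)

lemma bpos_vp: "1 \<le> p \<Longrightarrow> p \<le> 2*k \<Longrightarrow> bpos k (vp k p) = p \<and> vp k p \<in> verts k"
  by (auto simp: vp_def)

lemma bpos_range: "v \<in> verts k \<Longrightarrow> 1 \<le> bpos k v \<and> bpos k v \<le> 2*k"
  by (cases v) auto

lemma bpos_inj: "u \<in> verts k \<Longrightarrow> v \<in> verts k \<Longrightarrow> bpos k u = bpos k v \<Longrightarrow> u = v"
  by (metis vp_bpos)


locale dec =
  fixes k :: nat and d :: diagram
  assumes m: "motzkin k d"
begin

definition TA where "TA = {i. covered d (T i)}"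
definition BA where "BA = {j. covered d (B j)}"
definition psi where "psi v = (case v of T i \<Rightarrow> T (rk TA i) | B j \<Rightarrow> B (rk BA j))"
definition rr where "rr = {{T i, B (rk TA i)} | i. i \<in> TA}"
definition ll where "ll = {{T (rk BA j), B j} | j. j \<in> BA}"
definition fill where "fill = {{vp k (card TA + 1 + 2*q), vp k (card TA + 2 + 2*q)} | q. card TA + 2 + 2*q \<le> 2*k - card BA}"
definition tt where "tt = (\<lambda>E. psi ` E) ` d \<union> fill"

lemma psi_T[simp]: "psi (T i) = T (rk TA i)" by (simp add: psi_def)
lemma psi_B[simp]: "psi (B j) = B (rk BA j)" by (simp add: psi_def)

lemma cov_verts: "covered d v \<Longrightarrow> v \<in> verts k"
  unfolding covered_def using motzkin_verts[OF m] by blast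

lemma TA_sub: "TA \<subseteq> {1..k}" unfolding TA_def using cov_verts by fastforce
lemma BA_sub: "BA \<subseteq> {1..k}" unfolding BA_def using cov_verts by fastforce
lemma TA_fin: "finite TA" using TA_sub finite_subset by blast
lemma BA_fin: "finite BA" using BA_sub finite_subset by blast
lemma TA_card: "card TA \<le> k" using card_mono[OF _ TA_sub] by simp
lemma BA_card: "card BA \<le> k" using card_mono[OF _ BA_sub] by simp

lemma psi_pos:
  assumes "covered d v"
  shows "psi v \<in> verts k \<and> (bpos k (psi v) \<le> card TA \<or> 2*k + 1 - card BA \<le> bpos k (psi v))"
proof (cases v)
  case (T i)
  then have "i \<in> TA" using assms by (simp add: TA_def)
  then show ?thesis using T rk_le_card[OF TA_fin] rk_pos[of TA i] TA_card by fastforce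
next
  case (B j)
  then have "j \<in> BA" using assms by (simp add: BA_def)
  then show ?thesis using B rk_le_card[OF BA_fin] rk_pos[of BA j] BA_card by fastforce
qed

lemma psi_mono:
  assumes "covered d x" "covered d y" "bpos k x < bpos k y"
  shows "bpos k (psi x) < bpos k (psi y)"
proof (cases x)
  case (T i) note x = this
  have i: "i \<in> TA" using assms x by (simp add: TA_def)
  show ?thesis
  proof (cases y)
    case (T i')
    have "i' \<in> TA" using assms T by (simp add: TA_def)
    then show ?thesis using x T assms(3) rk_mono[OF TA_fin i] by simp
  next
    case (B j)
    have "psi x \<in> verts k" "psi y \<in> verts k" using psi_pos assms by blast+
    then show ?thesis using x B by auto
  qed
next
  case (B j) note x = this
  have j: "j \<in> BA" using assms x by (simp add: BA_def)
  have vx: "x \<in> verts k" "y \<in> verts k" using cov_verts assms by blast+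
  show ?thesis
  proof (cases y)
    case (T i') then show ?thesis using x vx assms(3) by auto
  next
    case (B j')
    have j': "j' \<in> BA" using assms B by (simp add: BA_def)
    have "j' < j" using assms(3) x B vx by auto
    then have "rk BA j' < rk BA j" using rk_mono[OF BA_fin j'] by simp
    moreover have "rk BA j \<le> k" using rk_le_card[OF BA_fin j] BA_card by simp
    ultimately show ?thesis using x B by auto
  qed
qed

lemma psi_inj: assumes "covered d x" "covered d y" "psi x = psi y" shows "x = y"
proof (rule ccontr)
  assume "x \<noteq> y"
  have v: "x \<in> verts k" "y \<in> verts k" using cov_verts assms by blast+
  then have "bpos k x \<noteq> bpos k y" using bpos_inj \<open>x \<noteq> y\<close> by blast
  then have "bpos k x < bpos k y \<or> bpos k y < bpos k x" by auto
  then show False using psi_mono[OF assms(1,2)] psi_mono[OF assms(2,1)] assms(3) by auto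
qed

lemma psi_refl: assumes "covered d x" "covered d y" "bpos k (psi x) < bpos k (psi y)"
  shows "bpos k x < bpos k y"
proof (rule ccontr)
  assume "\<not> bpos k x < bpos k y"
  then have "bpos k y < bpos k x \<or> bpos k y = bpos k x" by auto
  then show False
  proof
    assume "bpos k y < bpos k x" then show False using psi_mono[OF assms(2,1)] assms(3) by simp
  next
    assume "bpos k y = bpos k x"
    then have "x = y" using bpos_inj cov_verts assms(1,2) by metis
    then show False using assms(3) by simp
  qed
qed

lemma cov_in: "E \<in> d \<Longrightarrow> v \<in> E \<Longrightarrow> covered d v" unfolding covered_def by blast

lemma Union_eq: "\<Union>d = T ` TA \<union> B ` BA"
proof (intro set_eqI iffI)
  fix v assume "v \<in> \<Union>d"
  then have "covered d v" unfolding covered_def by blast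
  then show "v \<in> T ` TA \<union> B ` BA" by (cases v) (auto simp: TA_def BA_def)
next
  fix v assume "v \<in> T ` TA \<union> B ` BA"
  then have "covered d v" by (auto simp: TA_def BA_def)
  then show "v \<in> \<Union>d" unfolding covered_def by blast
qed

lemma d_fin: "finite d"
proof -
  have "d \<subseteq> Pow (verts k)" using motzkin_verts[OF m] by blast
  then show ?thesis using finite_verts by (meson finite_Pow_iff finite_subset)
qed

lemma parity: "even (card TA + card BA)"
proof -
  have "card (\<Union>d) = sum card d"
  proof (rule card_Union_disjoint)
    show "pairwise disjnt d" unfolding pairwise_def disjnt_def using motzkin_disj[OF m] by blast
    show "\<And>A. A \<in> d \<Longrightarrow> finite A" using motzkin_edge[OF m] by blast
  qed
  also have "sum card d = sum (\<lambda>_. 2) d"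
  proof (rule sum.cong)
    fix E assume "E \<in> d"
    then obtain u v where "E = {u,v}" "u \<noteq> v" using motzkin_edge[OF m] by blast
    then show "card E = 2" by simp
  qed simp
  also have "\<dots> = 2 * card d" by simp
  finally have c: "card (\<Union>d) = 2 * card d" .
  have "card (T ` TA \<union> B ` BA) = card (T ` TA) + card (B ` BA)"
    by (rule card_Un_disjoint) (auto simp: TA_fin BA_fin)
  also have "\<dots> = card TA + card BA" by (simp add: card_image inj_on_def)
  finally show ?thesis using c Union_eq by simp
qed

end


context dec begin

lemma fill_form:
  assumes "F \<in> fill"
  shows "\<exists>p. F = {vp k p, vp k (p+1)} \<and> card TA + 1 \<le> p \<and> p + 1 \<le> 2*k - card BA
      \<and> bpos k (vp k p) = p \<and> bpos k (vp k (p+1)) = p + 1 \<and> vp k p \<in> verts k \<and> vp k (p+1) \<in> verts k"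
proof -
  obtain q where q: "F = {vp k (card TA + 1 + 2*q), vp k (card TA + 2 + 2*q)}" "card TA + 2 + 2*q \<le> 2*k - card BA"
    using assms unfolding fill_def by blast
  let ?p = "card TA + 1 + 2*q"
  have "F = {vp k ?p, vp k (?p+1)}" using q(1) by simp
  moreover have "bpos k (vp k ?p) = ?p \<and> vp k ?p \<in> verts k" using q(2) by (intro bpos_vp) auto
  moreover have "bpos k (vp k (?p+1)) = ?p + 1 \<and> vp k (?p+1) \<in> verts k" using q(2) by (intro bpos_vp) auto
  ultimately show ?thesis using q(2) by (intro exI[of _ ?p]) auto
qed

lemma fill_elem:
  assumes "F \<in> fill" "z \<in> F"
  shows "z \<in> verts k \<and> card TA + 1 \<le> bpos k z \<and> bpos k z \<le> 2*k - card BA"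
proof -
  obtain p where p: "F = {vp k p, vp k (p+1)}" "card TA + 1 \<le> p" "p + 1 \<le> 2*k - card BA"
      "bpos k (vp k p) = p" "bpos k (vp k (p+1)) = p + 1" "vp k p \<in> verts k" "vp k (p+1) \<in> verts k"
    using fill_form[OF assms(1)] by blast
  have "z = vp k p \<or> z = vp k (p+1)" using p(1) assms(2) by blast
  then show ?thesis
  proof
    assume "z = vp k p" then show ?thesis using p by simp
  next
    assume "z = vp k (p+1)" then show ?thesis using p by simp
  qed
qed

lemma psi_not_fill: "covered d v \<Longrightarrow> F \<in> fill \<Longrightarrow> psi v \<notin> F"
proof
  assume h: "covered d v" "F \<in> fill" "psi v \<in> F"
  have a: "card TA + 1 \<le> bpos k (psi v) \<and> bpos k (psi v) \<le> 2*k - card BA" using fill_elem[OF h(2,3)] by blast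
  have "bpos k (psi v) \<le> card TA \<or> 2*k + 1 - card BA \<le> bpos k (psi v)" using psi_pos[OF h(1)] by blast
  then show False using a by arith
qed

lemma tt_cases: "F \<in> tt \<Longrightarrow> (\<exists>E\<in>d. F = psi ` E) \<or> F \<in> fill"
  unfolding tt_def by blast

lemma psiE: assumes "E \<in> d" shows "\<exists>u v. E = {u,v} \<and> u \<noteq> v \<and> covered d u \<and> covered d v \<and> psi ` E = {psi u, psi v} \<and> psi u \<noteq> psi v"
proof -
  obtain u v where uv: "E = {u,v}" "u \<noteq> v" using motzkin_edge[OF m assms] by blast
  have c: "covered d u" "covered d v" using uv assms cov_in by auto
  then have "psi u \<noteq> psi v" using psi_inj uv(2) by blast
  then show ?thesis using uv c by auto
qed

lemma consec: assumes "bpos k a \<in> {p, p+1}" "bpos k b \<in> {p, p+1}" "bpos k a < z" "z < bpos k b"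
  shows False using assms by auto

lemma tt_motzkin: "motzkin k tt"
proof -
  have ie: "\<forall>e\<in>tt. is_edge k e"
  proof
    fix e assume "e \<in> tt"
    from tt_cases[OF this] show "is_edge k e"
    proof
      assume "\<exists>E\<in>d. e = psi ` E"
      then obtain E where E: "E \<in> d" "e = psi ` E" by blast
      obtain u v where "E = {u,v}" "u \<noteq> v" "covered d u" "covered d v" "psi ` E = {psi u, psi v}" "psi u \<noteq> psi v"
        using psiE[OF E(1)] by blast
      then show ?thesis unfolding is_edge_def using E(2) psi_pos by blast
    next
      assume "e \<in> fill"
      from fill_form[OF this] obtain p where p: "e = {vp k p, vp k (p+1)}" "bpos k (vp k p) = p"
        "bpos k (vp k (p+1)) = p + 1" "vp k p \<in> verts k" "vp k (p+1) \<in> verts k" by blast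
      have "vp k p \<noteq> vp k (p+1)" using p(2,3) by auto
      then show ?thesis unfolding is_edge_def using p by blast
    qed
  qed
  have dj: "\<forall>e1\<in>tt. \<forall>e2\<in>tt. e1 \<inter> e2 \<noteq> {} \<longrightarrow> e1 = e2"
  proof (intro ballI impI)
    fix e1 e2 assume e: "e1 \<in> tt" "e2 \<in> tt" "e1 \<inter> e2 \<noteq> {}"
    then obtain w where w: "w \<in> e1" "w \<in> e2" by blast
    show "e1 = e2"
    proof (cases "e1 \<in> fill")
      case f1: True
      show ?thesis
      proof (cases "e2 \<in> fill")
        case True
        obtain q where q: "e1 = {vp k (card TA + 1 + 2*q), vp k (card TA + 2 + 2*q)}"
            "card TA + 2 + 2*q \<le> 2*k - card BA" using f1 unfolding fill_def by blast
        obtain q' where q': "e2 = {vp k (card TA + 1 + 2*q'), vp k (card TA + 2 + 2*q')}"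
            "card TA + 2 + 2*q' \<le> 2*k - card BA" using True unfolding fill_def by blast
        have b1: "bpos k (vp k (card TA + 1 + 2*q)) = card TA + 1 + 2*q"
             "bpos k (vp k (card TA + 2 + 2*q)) = card TA + 2 + 2*q"
             "bpos k (vp k (card TA + 1 + 2*q')) = card TA + 1 + 2*q'"
             "bpos k (vp k (card TA + 2 + 2*q')) = card TA + 2 + 2*q'"
          using conjunct1[OF bpos_vp[of "card TA + 1 + 2*q" k]] conjunct1[OF bpos_vp[of "card TA + 2 + 2*q" k]]
            conjunct1[OF bpos_vp[of "card TA + 1 + 2*q'" k]] conjunct1[OF bpos_vp[of "card TA + 2 + 2*q'" k]] q(2) q'(2)
          by simp_all
        have "w = vp k (card TA + 1 + 2*q) \<or> w = vp k (card TA + 2 + 2*q)" using w(1) q(1) by blast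
        then have x1: "bpos k w = card TA + 1 + 2*q \<or> bpos k w = card TA + 2 + 2*q" using b1(1,2) by metis
        have "w = vp k (card TA + 1 + 2*q') \<or> w = vp k (card TA + 2 + 2*q')" using w(2) q'(1) by blast
        then have x2: "bpos k w = card TA + 1 + 2*q' \<or> bpos k w = card TA + 2 + 2*q'" using b1(3,4) by metis
        from x1 x2 have "q = q'" by presburger
        then show ?thesis using q q' by simp
      next
        case False
        then obtain E where E: "E \<in> d" "e2 = psi ` E" using tt_cases[OF e(2)] by blast
        then obtain v where "v \<in> E" "w = psi v" using w(2) by blast
        then show ?thesis using psi_not_fill[OF cov_in[OF E(1)] f1] w(1) by blast
      qed
    next
      case f1: False
      then obtain E1 where E1: "E1 \<in> d" "e1 = psi ` E1" using tt_cases[OF e(1)] by blast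
      then obtain v1 where v1: "v1 \<in> E1" "w = psi v1" using w(1) by blast
      show ?thesis
      proof (cases "e2 \<in> fill")
        case True
        then show ?thesis using psi_not_fill[OF cov_in[OF E1(1) v1(1)] True] w(2) v1(2) by blast
      next
        case False
        then obtain E2 where E2: "E2 \<in> d" "e2 = psi ` E2" using tt_cases[OF e(2)] by blast
        then obtain v2 where v2: "v2 \<in> E2" "w = psi v2" using w(2) by blast
        have "v1 = v2" using psi_inj[OF cov_in[OF E1(1) v1(1)] cov_in[OF E2(1) v2(1)]] v1(2) v2(2) by simp
        then have "E1 = E2" using motzkin_disj[OF m E1(1) E2(1) v1(1)] v2(1) by simp
        then show ?thesis using E1 E2 by simp
      qed
    qed
  qed
  have nc: "noncrossing k tt" unfolding noncrossing_def
  proof (intro ballI allI impI notI)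
    fix e1 e2 a b c e
    assume e: "e1 \<in> tt" "e2 \<in> tt" "e1 = {a, b} \<and> e2 = {c, e}"
      and cr: "bpos k a < bpos k c \<and> bpos k c < bpos k b \<and> bpos k b < bpos k e"
    show False
    proof (cases "e1 \<in> fill")
      case True
      then obtain p where p: "e1 = {vp k p, vp k (p+1)}" "bpos k (vp k p) = p" "bpos k (vp k (p+1)) = p + 1"
        using fill_form by blast
      have "a \<in> e1" "b \<in> e1" using e by auto
      then have "bpos k a \<in> {p, p+1}" "bpos k b \<in> {p, p+1}" using p by auto
      then show False using consec cr by blast
    next
      case f1: False
      show False
      proof (cases "e2 \<in> fill")
        case True
        then obtain p where p: "e2 = {vp k p, vp k (p+1)}" "bpos k (vp k p) = p" "bpos k (vp k (p+1)) = p + 1"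
          using fill_form by blast
        have "c \<in> e2" "e \<in> e2" using e by auto
        then have "bpos k c \<in> {p, p+1}" "bpos k e \<in> {p, p+1}" using p by auto
        then show False using consec cr by blast
      next
        case False
        obtain E1 where E1: "E1 \<in> d" "e1 = psi ` E1" using tt_cases[OF e(1)] f1 by blast
        obtain E2 where E2: "E2 \<in> d" "e2 = psi ` E2" using tt_cases[OF e(2)] False by blast
        obtain a0 where a0: "a0 \<in> E1" "a = psi a0" using e E1 by blast
        obtain b0 where b0: "b0 \<in> E1" "b = psi b0" using e E1 by blast
        obtain c0 where c0: "c0 \<in> E2" "c = psi c0" using e E2 by blast
        obtain e0 where e0: "e0 \<in> E2" "e = psi e0" using e E2 by blast
        have cv: "covered d a0" "covered d b0" "covered d c0" "covered d e0"
          using cov_in E1(1) E2(1) a0 b0 c0 e0 by blast+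
        have "a0 \<noteq> b0" "c0 \<noteq> e0" using cr a0 b0 c0 e0 by auto
        obtain p q where "E1 = {p,q}" using motzkin_edge[OF m E1(1)] by blast
        then have E1e: "E1 = {a0,b0}" using two_elem a0(1) b0(1) \<open>a0 \<noteq> b0\<close> by blast
        obtain p q where "E2 = {p,q}" using motzkin_edge[OF m E2(1)] by blast
        then have E2e: "E2 = {c0,e0}" using two_elem c0(1) e0(1) \<open>c0 \<noteq> e0\<close> by blast
        have "bpos k a0 < bpos k c0" using psi_refl[OF cv(1,3)] cr a0 c0 by simp
        moreover have "bpos k c0 < bpos k b0" using psi_refl[OF cv(3,2)] cr c0 b0 by simp
        moreover have "bpos k b0 < bpos k e0" using psi_refl[OF cv(2,4)] cr b0 e0 by simp
        ultimately show False using motzkin_nc[OF m] E1(1) E2(1) E1e E2e by blast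
      qed
    qed
  qed
  show ?thesis unfolding motzkin_def using ie dj nc by blast
qed

end


lemma pre_comp:
  assumes I1: "\<And>x y a. P1 x a \<Longrightarrow> P1 y a \<Longrightarrow> x = y"
  shows "{pre P2 E | E. E \<in> {pre P1 F | F. F \<in> t \<and> (\<forall>z\<in>F. \<exists>y. P1 y z)} \<and> (\<forall>y\<in>E. \<exists>x. P2 x y)}
       = {pre (\<lambda>x z. \<exists>y. P2 x y \<and> P1 y z) F | F. F \<in> t \<and> (\<forall>z\<in>F. \<exists>x y. P2 x y \<and> P1 y z)}"
proof (intro set_eqI iffI)
  fix e assume "e \<in> {pre P2 E | E. E \<in> {pre P1 F | F. F \<in> t \<and> (\<forall>z\<in>F. \<exists>y. P1 y z)} \<and> (\<forall>y\<in>E. \<exists>x. P2 x y)}"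
  then obtain F where F: "e = pre P2 (pre P1 F)" "F \<in> t" "\<forall>z\<in>F. \<exists>y. P1 y z" "\<forall>y\<in>pre P1 F. \<exists>x. P2 x y"
    by blast
  have "pre P2 (pre P1 F) = pre (\<lambda>x z. \<exists>y. P2 x y \<and> P1 y z) F" unfolding pre_def by blast
  moreover have "\<forall>z\<in>F. \<exists>x y. P2 x y \<and> P1 y z"
  proof
    fix z assume "z \<in> F"
    then obtain y where "P1 y z" using F(3) by blast
    then have "y \<in> pre P1 F" unfolding pre_def using \<open>z \<in> F\<close> by blast
    then obtain x where "P2 x y" using F(4) by blast
    then show "\<exists>x y. P2 x y \<and> P1 y z" using \<open>P1 y z\<close> by blast
  qed
  ultimately show "e \<in> {pre (\<lambda>x z. \<exists>y. P2 x y \<and> P1 y z) F | F. F \<in> t \<and> (\<forall>z\<in>F. \<exists>x y. P2 x y \<and> P1 y z)}"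
    using F by blast
next
  fix e assume "e \<in> {pre (\<lambda>x z. \<exists>y. P2 x y \<and> P1 y z) F | F. F \<in> t \<and> (\<forall>z\<in>F. \<exists>x y. P2 x y \<and> P1 y z)}"
  then obtain F where F: "e = pre (\<lambda>x z. \<exists>y. P2 x y \<and> P1 y z) F" "F \<in> t" "\<forall>z\<in>F. \<exists>x y. P2 x y \<and> P1 y z"
    by blast
  have "pre P2 (pre P1 F) = pre (\<lambda>x z. \<exists>y. P2 x y \<and> P1 y z) F" unfolding pre_def by blast
  moreover have "\<forall>z\<in>F. \<exists>y. P1 y z" using F(3) by blast
  moreover have "\<forall>y\<in>pre P1 F. \<exists>x. P2 x y"
  proof
    fix y assume "y \<in> pre P1 F"
    then obtain z where z: "z \<in> F" "P1 y z" unfolding pre_def by blast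
    then obtain x y' where "P2 x y'" "P1 y' z" using F(3) by blast
    then show "\<exists>x. P2 x y" using I1 z(2) by blast
  qed
  ultimately show "e \<in> {pre P2 E | E. E \<in> {pre P1 F | F. F \<in> t \<and> (\<forall>z\<in>F. \<exists>y. P1 y z)} \<and> (\<forall>y\<in>E. \<exists>x. P2 x y)}"
    using F by blast
qed

context dec begin

lemma TA_pos: "\<forall>x\<in>TA. 1 \<le> x" using TA_sub by auto
lemma BA_pos: "\<forall>x\<in>BA. 1 \<le> x" using BA_sub by auto

lemma rr_mem: "{T a, B b} \<in> rr \<longleftrightarrow> a \<in> TA \<and> b = rk TA a"
  unfolding rr_def by (auto simp: doubleton_eq_iff)
lemma ll_mem: "{T a, B b} \<in> ll \<longleftrightarrow> b \<in> BA \<and> a = rk BA b"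
  unfolding ll_def by (auto simp: doubleton_eq_iff)
lemma rr_vertical: "vertical rr" unfolding rr_def vertical_def by blast
lemma ll_vertical: "vertical ll" unfolding ll_def vertical_def by blast

lemma rr_rp: "rp_diagram k rr"
proof -
  have "motzkin k rr"
  proof (rule mk_vert_motzkin[OF rr_vertical])
    fix i j assume "{T i, B j} \<in> rr"
    then have "i \<in> TA" "j = rk TA i" using rr_mem by auto
    then show "1 \<le> i \<and> i \<le> k \<and> 1 \<le> j \<and> j \<le> k"
      using TA_sub rk_pos[of TA i] rk_le_self[OF TA_pos, of i] by auto
  next
    fix i j i' j' assume "{T i, B j} \<in> rr" "{T i', B j'} \<in> rr"
    then show "i < i' \<longleftrightarrow> j < j'" using rr_mem rk_mono_iff[OF TA_fin] by auto
  qed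
  then show ?thesis
    by (rule rp_intro[OF _ rr_vertical]) (use rr_mem rk_le_self[OF TA_pos] in auto)
qed

lemma ll_lp: "lp_diagram k ll"
proof -
  have "motzkin k ll"
  proof (rule mk_vert_motzkin[OF ll_vertical])
    fix i j assume "{T i, B j} \<in> ll"
    then have "j \<in> BA" "i = rk BA j" using ll_mem by auto
    then show "1 \<le> i \<and> i \<le> k \<and> 1 \<le> j \<and> j \<le> k"
      using BA_sub rk_pos[of BA j] rk_le_self[OF BA_pos, of j] by auto
  next
    fix i j i' j' assume "{T i, B j} \<in> ll" "{T i', B j'} \<in> ll"
    then show "i < i' \<longleftrightarrow> j < j'" using ll_mem rk_mono_iff[OF BA_fin] by auto
  qed
  then show ?thesis
    by (rule lp_intro[OF _ ll_vertical]) (use ll_mem rk_le_self[OF BA_pos] in auto)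
qed

lemma tt_tl: "tl_diagram k tt"
  unfolding tl_diagram_def
proof (intro conjI ballI tt_motzkin)
  fix v assume v: "v \<in> verts k"
  let ?p = "bpos k v"
  have pr: "1 \<le> ?p" "?p \<le> 2*k" using bpos_range[OF v] by auto
  have vv: "v = vp k ?p" using vp_bpos[OF v] by simp
  have par: "even (card TA + card BA)" by (rule parity)
  have ck: "card TA \<le> k" "card BA \<le> k" using TA_card BA_card .
  show "covered tt v"
  proof (cases "?p \<le> card TA")
    case True
    then have "?p \<in> rk TA ` TA" using rk_image[OF TA_fin] pr by auto
    then obtain i where i: "i \<in> TA" "rk TA i = ?p" by (metis imageE)
    then obtain E where E: "E \<in> d" "T i \<in> E" unfolding TA_def covered_def by blast
    have "v = T ?p" using vv True ck by (simp add: vp_def)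
    then have "v \<in> psi ` E" using E(2) i(2) by force
    moreover have "psi ` E \<in> tt" using E(1) unfolding tt_def by blast
    ultimately show ?thesis unfolding covered_def by blast
  next
    case nT: False
    show ?thesis
    proof (cases "2*k + 1 - card BA \<le> ?p")
      case True
      define j where "j = 2*k + 1 - ?p"
      have j: "1 \<le> j" "j \<le> card BA" using True pr unfolding j_def by auto
      then have "j \<in> rk BA ` BA" using rk_image[OF BA_fin] by auto
      then obtain j' where j': "j' \<in> BA" "rk BA j' = j" by (metis imageE)
      then obtain E where E: "E \<in> d" "B j' \<in> E" unfolding BA_def covered_def by blast
      have "\<not> ?p \<le> k" using True ck by arith
      then have "v = B j" using vv unfolding j_def by (simp add: vp_def)
      then have "v \<in> psi ` E" using E(2) j'(2) by force
      moreover have "psi ` E \<in> tt" using E(1) unfolding tt_def by blast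
      ultimately show ?thesis unfolding covered_def by blast
    next
      case False
      then have mid: "card TA + 1 \<le> ?p" "?p \<le> 2*k - card BA" using nT by arith+
      show ?thesis
      proof (cases "even (?p - card TA - 1)")
        case True
        define q where "q = (?p - card TA - 1) div 2"
        have pq: "?p = card TA + 1 + 2*q" using True mid unfolding q_def by presburger
        have "card TA + 2 + 2*q \<le> 2*k - card BA" using pq mid par ck by presburger
        then have "{vp k (card TA + 1 + 2*q), vp k (card TA + 2 + 2*q)} \<in> fill" unfolding fill_def by blast
        moreover have "v \<in> {vp k (card TA + 1 + 2*q), vp k (card TA + 2 + 2*q)}" using vv pq by simp
        ultimately show ?thesis unfolding covered_def tt_def by blast
      next
        case False
        define q where "q = (?p - card TA - 2) div 2"
        have pq: "?p = card TA + 2 + 2*q" using False mid unfolding q_def by presburger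
        have "card TA + 2 + 2*q \<le> 2*k - card BA" using pq mid by simp
        then have "{vp k (card TA + 1 + 2*q), vp k (card TA + 2 + 2*q)} \<in> fill" unfolding fill_def by blast
        moreover have "v \<in> {vp k (card TA + 1 + 2*q), vp k (card TA + 2 + 2*q)}" using vv pq by simp
        ultimately show ?thesis unfolding covered_def tt_def by blast
      qed
    qed
  qed
qed

end


context dec begin

lemma Phi_iff: "(\<exists>y. R2 ll x y \<and> R1 rr y z) \<longleftrightarrow> covered d x \<and> z = psi x"
proof (cases x)
  case (T i)
  then show ?thesis by (auto simp: rr_mem TA_def)
next
  case (B j')
  have "(\<exists>y. R2 ll x y \<and> R1 rr y z) \<longleftrightarrow> (\<exists>j. j' \<in> BA \<and> j = rk BA j' \<and> z = B j)"
    using B by (auto simp: ll_mem)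
  then show ?thesis using B by (auto simp: BA_def)
qed

lemma pre_psi: assumes E: "E \<in> d" shows "pre (\<lambda>x z. covered d x \<and> z = psi x) (psi ` E) = E"
proof (intro set_eqI iffI)
  fix x assume "x \<in> pre (\<lambda>x z. covered d x \<and> z = psi x) (psi ` E)"
  then have "\<exists>z\<in>psi ` E. covered d x \<and> z = psi x" unfolding pre_def by (rule CollectD)
  then obtain z where z: "z \<in> psi ` E" "covered d x" "z = psi x" by (elim bexE conjE)
  then obtain y where y0: "y \<in> E" "z = psi y" by (elim imageE)
  have y: "y \<in> E" "covered d x" "psi x = psi y" using y0 z by simp_all
  then have "x = y" using psi_inj[OF y(2) cov_in[OF E y(1)] y(3)] by blast
  then show "x \<in> E" using y by simp
next
  fix x assume "x \<in> E"
  then have "covered d x" "psi x \<in> psi ` E" using cov_in[OF E \<open>x \<in> E\<close>] by simp_all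
  then show "x \<in> pre (\<lambda>x z. covered d x \<and> z = psi x) (psi ` E)" unfolding pre_def
    by (intro CollectI bexI[of _ "psi x"]) simp_all
qed

lemma final_eq: "{pre (\<lambda>x z. covered d x \<and> z = psi x) F | F. F \<in> tt \<and> (\<forall>z\<in>F. \<exists>x. covered d x \<and> z = psi x)} = d"
proof (intro set_eqI iffI)
  fix e assume "e \<in> {pre (\<lambda>x z. covered d x \<and> z = psi x) F | F. F \<in> tt \<and> (\<forall>z\<in>F. \<exists>x. covered d x \<and> z = psi x)}"
  then obtain F where F: "e = pre (\<lambda>x z. covered d x \<and> z = psi x) F" "F \<in> tt" "\<forall>z\<in>F. \<exists>x. covered d x \<and> z = psi x"
    by blast
  show "e \<in> d"
  proof (cases "F \<in> fill")
    case True
    obtain p where "F = {vp k p, vp k (p+1)}" using fill_form[OF True] by (elim exE conjE) simp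
    then have "vp k p \<in> F" by simp
    then obtain x where "covered d x" "vp k p = psi x" using F(3) by blast
    then have "psi x \<in> F" using \<open>vp k p \<in> F\<close> by metis
    then show ?thesis using psi_not_fill[OF \<open>covered d x\<close> True] by blast
  next
    case False
    then obtain E where E: "E \<in> d" "F = psi ` E" using tt_cases[OF F(2)] by blast
    have "pre (\<lambda>x z. covered d x \<and> z = psi x) F = E"
      unfolding E(2) by (rule pre_psi[OF E(1)])
    then show ?thesis using F(1) E(1) by simp
  qed
next
  fix E assume E: "E \<in> d"
  have a: "E = pre (\<lambda>x z. covered d x \<and> z = psi x) (psi ` E)" using pre_psi[OF E] by simp
  have b: "psi ` E \<in> tt" using E unfolding tt_def by blast
  have c: "\<forall>z\<in>psi ` E. \<exists>x. covered d x \<and> z = psi x" using cov_in[OF E] by blast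
  show "E \<in> {pre (\<lambda>x z. covered d x \<and> z = psi x) F | F. F \<in> tt \<and> (\<forall>z\<in>F. \<exists>x. covered d x \<and> z = psi x)}"
    unfolding mem_Collect_eq by (intro exI[of _ "psi ` E"] conjI a b c)
qed

lemma decomp: "compose (compose rr tt) ll = d"
proof -
  have mrr: "motzkin k rr" using rp_motzkin[OF rr_rp] .
  have mll: "motzkin k ll" using lp_motzkin[OF ll_lp] .
  have mtt: "motzkin k tt" by (rule tt_motzkin)
  have c1: "compose rr tt = {pre (R1 rr) F | F. F \<in> tt \<and> (\<forall>z\<in>F. \<exists>y. R1 rr y z)}"
    unfolding compose_left[OF mrr rr_vertical mtt]
    by (rule pair_to_pre[OF mtt]) (use R1_func[OF mrr] R1_inj[OF mrr] in blast)+
  have mrt: "motzkin k (compose rr tt)" by (rule compose_left_motzkin[OF mrr rr_vertical mtt])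
  have c2: "compose (compose rr tt) ll = {pre (R2 ll) E | E. E \<in> compose rr tt \<and> (\<forall>y\<in>E. \<exists>x. R2 ll x y)}"
    unfolding compose_right[OF mrt mll ll_vertical]
    by (rule pair_to_pre[OF mrt]) (use R2_func[OF mll] R2_inj[OF mll] in blast)+
  have c3: "compose (compose rr tt) ll = {pre (\<lambda>x z. \<exists>y. R2 ll x y \<and> R1 rr y z) F | F. F \<in> tt \<and> (\<forall>z\<in>F. \<exists>x y. R2 ll x y \<and> R1 rr y z)}"
    unfolding c2 unfolding c1 by (rule pre_comp) (use R1_inj[OF mrr] in blast)
  have e1: "(\<lambda>x z. \<exists>y. R2 ll x y \<and> R1 rr y z) = (\<lambda>x z. covered d x \<and> z = psi x)"
    using Phi_iff by (intro ext) blast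
  have e2: "(\<exists>x y. R2 ll x y \<and> R1 rr y z) \<longleftrightarrow> (\<exists>x. covered d x \<and> z = psi x)" for z
    using Phi_iff by blast
  show ?thesis unfolding c3 e1 e2 by (rule final_eq)
qed

lemma decomp_thm: "\<exists>r t l. rp_diagram k r \<and> tl_diagram k t \<and> lp_diagram k l \<and>
               kappa r t = 0 \<and> kappa (compose r t) l = 0 \<and> compose (compose r t) l = d"
proof (intro exI conjI)
  show "rp_diagram k rr" by (rule rr_rp)
  show "tl_diagram k tt" by (rule tt_tl)
  show "lp_diagram k ll" by (rule ll_lp)
  show "kappa rr tt = 0" by (rule kappa_left[OF rr_vertical])
  show "kappa (compose rr tt) ll = 0" by (rule kappa_right[OF ll_vertical])
  show "compose (compose rr tt) ll = d" by (rule decomp)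
qed

end

lemma decomposition:
  "motzkin k d \<Longrightarrow> \<exists>r t l. rp_diagram k r \<and> tl_diagram k t \<and> lp_diagram k l \<and>
               kappa r t = 0 \<and> kappa (compose r t) l = 0 \<and> compose (compose r t) l = d"
  using dec.decomp_thm[of k d] dec.intro by blast


definition lmeas :: "nat \<Rightarrow> diagram \<Rightarrow> nat" where
  "lmeas k d = (\<Sum>p\<in>vrel d. snd p - fst p) + card ({1..k} - fst ` vrel d)"

definition GL :: "nat \<Rightarrow> (diagram \<Rightarrow> 'a::comm_ring_1) set" where
  "GL k = {basis (l_diag k i) | i. 1 \<le> i \<and> i < k} \<union> {basis (p_diag k j) | j. 1 \<le> j \<and> j \<le> k}"

lemma lp_step:
  assumes lp: "lp_diagram k d" and i0: "{T i0, B (n+1)} \<in> d" "i0 \<le> n"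
    and nob: "\<And>i. {T i, B n} \<notin> d"
  defines "d' \<equiv> insert {T i0, B n} (d - {{T i0, B (n+1)}})"
  shows "lp_diagram k d'" "compose d' (l_diag k n) = d" "lmeas k d' < lmeas k d"
    "1 \<le> n" "n < k"
proof -
  have m: "motzkin k d" and v: "vertical d" using lp lp_motzkin lp_vertical by auto
  have mem: "{T a, B b} \<in> d' \<longleftrightarrow> (a = i0 \<and> b = n) \<or> ({T a, B b} \<in> d \<and> \<not> (a = i0 \<and> b = n + 1))" for a b
    unfolding d'_def by (auto simp: doubleton_eq_iff)
  have vd': "vertical d'" using v unfolding d'_def vertical_def by blast
  have rng: "1 \<le> i0" "n + 1 \<le> k" using edge_range[OF m i0(1)] by auto
  then show "1 \<le> n" "n < k" using i0(2) by auto
  have md': "motzkin k d'"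
  proof (rule mk_vert_motzkin[OF vd'])
    fix i j assume "{T i, B j} \<in> d'"
    then show "1 \<le> i \<and> i \<le> k \<and> 1 \<le> j \<and> j \<le> k" using mem edge_range[OF m] rng i0(2) by auto
  next
    have key: "a < i0 \<longleftrightarrow> b < n" "i0 < a \<longleftrightarrow> n < b" if "{T a, B b} \<in> d" "\<not> (a = i0 \<and> b = n + 1)" for a b
    proof -
      have "b \<noteq> n + 1" using TB_uniq2[OF m that(1)] i0(1) that(2) by auto
      moreover have "b \<noteq> n" using nob that(1) by auto
      moreover have "a < i0 \<longleftrightarrow> b < n + 1" "i0 < a \<longleftrightarrow> n + 1 < b"
        using vert_mono_iff[OF m that(1) i0(1)] vert_mono_iff[OF m i0(1) that(1)] by auto
      ultimately show "a < i0 \<longleftrightarrow> b < n" "i0 < a \<longleftrightarrow> n < b" by auto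
    qed
    fix i j i' j' assume h: "{T i, B j} \<in> d'" "{T i', B j'} \<in> d'"
    show "i < i' \<longleftrightarrow> j < j'"
    proof (cases "i = i0 \<and> j = n")
      case True
      then show ?thesis
      proof (cases "i' = i0 \<and> j' = n")
        case True then show ?thesis using \<open>i = i0 \<and> j = n\<close> by simp
      next
        case False then have "{T i', B j'} \<in> d" "\<not> (i' = i0 \<and> j' = n + 1)" using h(2) mem by auto
        then show ?thesis using key[of i' j'] True by simp
      qed
    next
      case False then have o: "{T i, B j} \<in> d" "\<not> (i = i0 \<and> j = n + 1)" using h(1) mem by auto
      show ?thesis
      proof (cases "i' = i0 \<and> j' = n")
        case True then show ?thesis using key[OF o] by simp
      next
        case False then have "{T i', B j'} \<in> d" using h(2) mem by auto
        then show ?thesis using vert_mono_iff[OF m o(1)] by simp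
      qed
    qed
  qed
  show "lp_diagram k d'"
  proof (rule lp_intro[OF md' vd'])
    fix i j assume "{T i, B j} \<in> d'"
    then show "i \<le> j" using mem lp_ij[OF lp] i0(2) by force
  qed
  have ml: "motzkin k (l_diag k n)" using l_lp[OF \<open>1 \<le> n\<close> \<open>n < k\<close>] lp_motzkin by blast
  show "compose d' (l_diag k n) = d"
  proof (rule vert_ext)
    show "vertical (compose d' (l_diag k n))" by (rule vcomp_vertical[OF md' vd' ml l_vertical])
    show "vertical d" by fact
    fix a b
    show "{T a, B b} \<in> compose d' (l_diag k n) \<longleftrightarrow> {T a, B b} \<in> d"
      unfolding vcomp_mem[OF md' vd' ml l_vertical] l_mem mem
    proof
      assume "\<exists>c. ((a = i0 \<and> c = n) \<or> ({T a, B c} \<in> d \<and> \<not> (a = i0 \<and> c = n + 1))) \<and>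
               ((c = b \<and> 1 \<le> c \<and> c \<le> k \<and> c \<noteq> n \<and> c \<noteq> n + 1) \<or> (c = n \<and> b = n + 1))"
      then obtain c where c: "(a = i0 \<and> c = n) \<or> ({T a, B c} \<in> d \<and> \<not> (a = i0 \<and> c = n + 1))"
        "(c = b \<and> 1 \<le> c \<and> c \<le> k \<and> c \<noteq> n \<and> c \<noteq> n + 1) \<or> (c = n \<and> b = n + 1)" by blast
      then show "{T a, B b} \<in> d" using nob i0(1) by auto
    next
      assume ab: "{T a, B b} \<in> d"
      show "\<exists>c. ((a = i0 \<and> c = n) \<or> ({T a, B c} \<in> d \<and> \<not> (a = i0 \<and> c = n + 1))) \<and>
               ((c = b \<and> 1 \<le> c \<and> c \<le> k \<and> c \<noteq> n \<and> c \<noteq> n + 1) \<or> (c = n \<and> b = n + 1))"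
      proof (cases "a = i0 \<and> b = n + 1")
        case True then show ?thesis by blast
      next
        case False
        have "b \<noteq> n + 1" using TB_uniq2[OF m ab] i0(1) False by auto
        moreover have "b \<noteq> n" using nob ab by auto
        moreover have "1 \<le> b \<and> b \<le> k" using edge_range[OF m ab] by auto
        ultimately show ?thesis using ab False by blast
      qed
    qed
  qed
  have vr: "vrel d' = insert (i0, n) (vrel d - {(i0, n+1)})"
    using mem by auto
  have fin: "finite (vrel d)" using vrel_fin[OF m] .
  have notin: "(i0, n) \<notin> vrel d - {(i0, n+1)}" using nob by auto
  have "fst ` vrel d' = fst ` vrel d"
  proof -
    have "fst ` vrel d' = insert i0 (fst ` (vrel d - {(i0, n+1)}))" unfolding vr by simp
    also have "\<dots> = fst ` insert (i0, n+1) (vrel d - {(i0, n+1)})" by (simp only: image_insert fst_conv)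
    also have "insert (i0, n+1) (vrel d - {(i0, n+1)}) = vrel d" using i0(1) by (intro insert_Diff) simp
    finally show ?thesis .
  qed
  moreover have "(\<Sum>p\<in>vrel d'. snd p - fst p) < (\<Sum>p\<in>vrel d. snd p - fst p)"
  proof -
    have "(\<Sum>p\<in>vrel d'. snd p - fst p) = (n - i0) + (\<Sum>p\<in>vrel d - {(i0, n+1)}. snd p - fst p)"
      unfolding vr using fin notin by simp
    moreover have "(\<Sum>p\<in>vrel d. snd p - fst p) = (n + 1 - i0) + (\<Sum>p\<in>vrel d - {(i0, n+1)}. snd p - fst p)"
      using sum.remove[OF fin, of "(i0,n+1)" "\<lambda>p. snd p - fst p"] i0(1) by simp
    ultimately show ?thesis using i0(2) by simp
  qed
  ultimately show "lmeas k d' < lmeas k d" unfolding lmeas_def by simp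
qed

lemma lp_step2:
  assumes lp: "lp_diagram k d" and diag: "\<And>i j. {T i, B j} \<in> d \<Longrightarrow> i = j"
    and j: "1 \<le> j" "j \<le> k" and nc: "\<And>b. {T j, B b} \<notin> d"
  defines "d' \<equiv> insert {T j, B j} d"
  shows "lp_diagram k d'" "compose d' (p_diag k j) = d" "lmeas k d' < lmeas k d"
proof -
  have m: "motzkin k d" and v: "vertical d" using lp lp_motzkin lp_vertical by auto
  have mem: "{T a, B b} \<in> d' \<longleftrightarrow> (a = j \<and> b = j) \<or> {T a, B b} \<in> d" for a b
    unfolding d'_def by (auto simp: doubleton_eq_iff)
  have nb: "{T a, B j} \<notin> d" for a using diag nc by blast
  have vd': "vertical d'" using v unfolding d'_def vertical_def by blast
  have diag': "a = b" if "{T a, B b} \<in> d'" for a b using that diag by (auto simp: mem)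
  have md': "motzkin k d'"
  proof (rule mk_vert_motzkin[OF vd'])
    fix a b assume "{T a, B b} \<in> d'"
    then show "1 \<le> a \<and> a \<le> k \<and> 1 \<le> b \<and> b \<le> k" using mem edge_range[OF m] j by auto
  next
    fix a b a' b' assume "{T a, B b} \<in> d'" "{T a', B b'} \<in> d'"
    then show "a < a' \<longleftrightarrow> b < b'" using diag' by blast
  qed
  show "lp_diagram k d'"
    by (rule lp_intro[OF md' vd']) (use diag' in blast)
  have mp: "motzkin k (p_diag k j)" using p_lp lp_motzkin by blast
  show "compose d' (p_diag k j) = d"
  proof (rule vert_ext)
    show "vertical (compose d' (p_diag k j))" by (rule vcomp_vertical[OF md' vd' mp p_vertical])
    show "vertical d" by fact
    fix a b
    show "{T a, B b} \<in> compose d' (p_diag k j) \<longleftrightarrow> {T a, B b} \<in> d"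
      unfolding vcomp_mem[OF md' vd' mp p_vertical] p_mem mem
      using nb edge_range[OF m] by auto
  qed
  have vr: "vrel d' = insert (j, j) (vrel d)" using mem by auto
  have fin: "finite (vrel d)" using vrel_fin[OF m] .
  have notin: "(j, j) \<notin> vrel d" using nc by auto
  have "(\<Sum>p\<in>vrel d'. snd p - fst p) = (\<Sum>p\<in>vrel d. snd p - fst p)"
    unfolding vr using fin notin by simp
  moreover have "card ({1..k} - fst ` vrel d') < card ({1..k} - fst ` vrel d)"
  proof -
    have "fst ` vrel d' = insert j (fst ` vrel d)" unfolding vr by simp
    moreover have "j \<notin> fst ` vrel d" using nc by auto
    ultimately have eq: "{1..k} - fst ` vrel d' = ({1..k} - fst ` vrel d) - {j}" by auto
    have jm: "j \<in> {1..k} - fst ` vrel d" using j \<open>j \<notin> fst ` vrel d\<close> by auto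
    show ?thesis unfolding eq by (rule card_Diff1_less[OF _ jm]) simp
  qed
  ultimately show "lmeas k d' < lmeas k d" unfolding lmeas_def by simp
qed

lemma lp_gen:
  assumes "lp_diagram k d"
  shows "basis d \<in> alg_gen k x (GL k)"
  using assms
proof (induction "lmeas k d" arbitrary: d rule: less_induct)
  case less
  have m: "motzkin k d" and v: "vertical d" using less.prems lp_motzkin lp_vertical by auto
  show ?case
  proof (cases "\<exists>i j. {T i, B j} \<in> d \<and> i < j")
    case True
    let ?J = "{j. \<exists>i. {T i, B j} \<in> d \<and> i < j}"
    have finJ: "finite ?J" by (rule finite_subset[of _ "{..k}"]) (use edge_range[OF m] in auto)
    have neJ: "?J \<noteq> {}" using True by blast
    define mm where "mm = Min ?J"
    have "mm \<in> ?J" unfolding mm_def using Min_in[OF finJ neJ] .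
    then obtain i0 where i0: "{T i0, B mm} \<in> d" "i0 < mm" by blast
    then obtain n where n: "mm = Suc n" by (cases mm) auto
    have i0': "{T i0, B (n+1)} \<in> d" "i0 \<le> n" using i0 n by auto
    have mn: "mm \<le> j" if "{T i, B j} \<in> d" "i < j" for i j
      unfolding mm_def using that finJ by (intro Min_le) auto
    have nob: "{T i, B n} \<notin> d" for i
    proof
      assume h: "{T i, B n} \<in> d"
      have "i < i0" using vert_mono_iff[OF m h i0'(1)] by simp
      have "i \<le> n" using lp_ij[OF less.prems h] .
      show False
      proof (cases "i < n")
        case True then show False using mn[OF h] n by simp
      next
        case False then show False using \<open>i \<le> n\<close> \<open>i < i0\<close> i0'(2) by simp
      qed
    qed
    note st = lp_step[OF less.prems i0' nob]
    let ?d' = "insert {T i0, B n} (d - {{T i0, B (n+1)}})"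
    have IH: "basis ?d' \<in> alg_gen k x (GL k)" using less.hyps[OF st(3) st(1)] .
    have g: "basis (l_diag k n) \<in> alg_gen k x (GL k)"
      by (rule alg_gen.gen) (use st(4,5) in \<open>auto simp: GL_def\<close>)
    have "mmult k x (basis ?d') (basis (l_diag k n)) = basis (compose ?d' (l_diag k n))"
      by (rule mmult_basis0[OF lp_motzkin[OF st(1)] lp_motzkin[OF l_lp[OF st(4,5)]] kappa_left[OF lp_vertical[OF st(1)]]])
    then have "basis d = mmult k x (basis ?d') (basis (l_diag k n))" using st(2) by simp
    then show ?thesis using alg_gen.mult[OF IH g] by simp
  next
    case False
    then have diag: "\<And>i j. {T i, B j} \<in> d \<Longrightarrow> i = j" using lp_ij[OF less.prems] by force
    show ?thesis
    proof (cases "\<exists>j. 1 \<le> j \<and> j \<le> k \<and> (\<forall>b. {T j, B b} \<notin> d)")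
      case True
      then obtain j where j: "1 \<le> j" "j \<le> k" "\<And>b. {T j, B b} \<notin> d" by blast
      note st = lp_step2[OF less.prems diag j]
      let ?d' = "insert {T j, B j} d"
      have IH: "basis ?d' \<in> alg_gen k x (GL k)" using less.hyps[OF st(3) st(1)] .
      have g: "basis (p_diag k j) \<in> alg_gen k x (GL k)"
        by (rule alg_gen.gen) (use j in \<open>auto simp: GL_def\<close>)
      have "mmult k x (basis ?d') (basis (p_diag k j)) = basis (compose ?d' (p_diag k j))"
        by (rule mmult_basis0[OF lp_motzkin[OF st(1)] lp_motzkin[OF p_lp] kappa_left[OF lp_vertical[OF st(1)]]])
      then have "basis d = mmult k x (basis ?d') (basis (p_diag k j))" using st(2) by simp
      then show ?thesis using alg_gen.mult[OF IH g] by simp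
    next
      case False
      then have "d = idd k" using diag_idd[OF m v diag] by blast
      then show ?thesis using alg_gen.one by simp
    qed
  qed
qed


lemma basis_supp: "P d \<Longrightarrow> basis d \<in> supported P"
  unfolding supported_def basis_def by auto

lemma supp_zero: "(\<lambda>_. 0) \<in> supported P" unfolding supported_def by simp
lemma supp_add: fixes f g :: "diagram \<Rightarrow> 'a::comm_ring_1" shows "f \<in> supported P \<Longrightarrow> g \<in> supported P \<Longrightarrow> (\<lambda>d. f d + g d) \<in> supported P"
  unfolding supported_def
proof (intro CollectI allI impI)
  fix d assume h: "f \<in> {f. \<forall>d. f d \<noteq> 0 \<longrightarrow> P d}" "g \<in> {f. \<forall>d. f d \<noteq> 0 \<longrightarrow> P d}" "f d + g d \<noteq> 0"
  then have "f d \<noteq> 0 \<or> g d \<noteq> 0" by auto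
  then show "P d" using h(1,2) by blast
qed
lemma supp_smul: fixes f :: "diagram \<Rightarrow> 'a::comm_ring_1" shows "f \<in> supported P \<Longrightarrow> (\<lambda>d. c * f d) \<in> supported P"
  unfolding supported_def
proof (intro CollectI allI impI)
  fix d assume h: "f \<in> {f. \<forall>d. f d \<noteq> 0 \<longrightarrow> P d}" "c * f d \<noteq> 0"
  then have "f d \<noteq> 0" by auto
  then show "P d" using h(1) by blast
qed

lemma Mk_sub: "(Mk k :: (diagram \<Rightarrow> 'a::comm_ring_1) set) \<subseteq> triple_prod k x (RPk k) (TLk k) (LPk k)"
proof
  fix f :: "diagram \<Rightarrow> 'a" assume f: "f \<in> Mk k"
  have fe: "f = (\<lambda>e. \<Sum>d\<in>Mot k. f d * basis d e)"
    by (rule expand[OF finite_Mot]) (use f in \<open>auto simp: Mk_def supported_def Mot_def\<close>)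
  have "basis d \<in> triple_prod k x (RPk k) (TLk k) (LPk k)" if d: "d \<in> Mot k" for d
  proof -
    have md: "motzkin k d" using d by (simp add: Mot_def)
    obtain r t l where rtl: "rp_diagram k r" "tl_diagram k t" "lp_diagram k l" "kappa r t = 0"
      "kappa (compose r t) l = 0" "compose (compose r t) l = d" using decomposition[OF md] by blast
    have mr: "motzkin k r" "vertical r" using rtl(1) rp_motzkin rp_vertical by auto
    have mt: "motzkin k t" using rtl(2) by (simp add: tl_diagram_def)
    have ml: "motzkin k l" using rtl(3) lp_motzkin by auto
    have mrt: "motzkin k (compose r t)" using compose_left_motzkin[OF mr mt] .
    have "mmult k x (mmult k x (basis r) (basis t)) (basis l) = basis d"
      using mmult_basis0[OF mr(1) mt rtl(4), of x] mmult_basis0[OF mrt ml rtl(5), of x] rtl(6) by simp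
    moreover have "basis r \<in> RPk k" "basis t \<in> TLk k" "basis l \<in> LPk k"
      using rtl(1-3) by (auto simp: RPk_def TLk_def LPk_def intro: basis_supp)
    ultimately show ?thesis unfolding triple_prod_def
      by (intro lspan.gen CollectI exI[of _ "basis r"] exI[of _ "basis t"] exI[of _ "basis l"]) simp
  qed
  then have "(\<lambda>e. \<Sum>d\<in>Mot k. f d * basis d e) \<in> triple_prod k x (RPk k) (TLk k) (LPk k)"
    unfolding triple_prod_def by (intro lspan_sum[OF finite_Mot]) auto
  then show "f \<in> triple_prod k x (RPk k) (TLk k) (LPk k)" using fe by simp
qed

lemma triple_sub: "triple_prod k x (RPk k) (TLk k) (LPk k) \<subseteq> (Mk k :: (diagram \<Rightarrow> 'a::comm_ring_1) set)"
proof
  fix f :: "diagram \<Rightarrow> 'a" assume "f \<in> triple_prod k x (RPk k) (TLk k) (LPk k)"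
  then show "f \<in> Mk k" unfolding triple_prod_def
  proof (induction rule: lspan.induct)
    case zero then show ?case unfolding Mk_def by (rule supp_zero)
  next
    case (gen f)
    then obtain a b c where h: "f = mmult k x (mmult k x a b) c" "c \<in> LPk k" by blast
    show ?case unfolding Mk_def supported_def
    proof (intro CollectI allI impI)
      fix d assume "f d \<noteq> 0"
      then obtain d1 d2 where dd: "motzkin k d1" "motzkin k d2" "compose d1 d2 = d" "c d2 \<noteq> 0"
        using mmult_nz[of k x "mmult k x a b" c d] h(1) by blast
      have "lp_diagram k d2" using dd(4) h(2) by (auto simp: LPk_def supported_def)
      then show "motzkin k d" using compose_right_motzkin[OF dd(1) lp_motzkin lp_vertical] dd(3) by blast
    qed
  next
    case (add f g) then show ?case unfolding Mk_def using supp_add by blast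
  next
    case (smul f c) then show ?case unfolding Mk_def using supp_smul by blast
  qed
qed

lemma RP_sub: "(RPk k :: (diagram \<Rightarrow> 'a::comm_ring_1) set) \<subseteq> alg_gen k x (GR k)"
proof
  fix f :: "diagram \<Rightarrow> 'a" assume f: "f \<in> RPk k"
  have fin: "finite {d. rp_diagram k d}"
    by (rule finite_subset[OF _ finite_Mot[of k]]) (auto simp: Mot_def rp_diagram_def)
  have fe: "f = (\<lambda>e. \<Sum>d\<in>{d. rp_diagram k d}. f d * basis d e)"
    by (rule expand[OF fin]) (use f in \<open>auto simp: RPk_def supported_def\<close>)
  have "(\<lambda>e. \<Sum>d\<in>{d. rp_diagram k d}. f d * basis d e) \<in> alg_gen k x (GR k)"
    by (rule alg_sum[OF fin]) (use rp_gen in auto)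
  then show "f \<in> alg_gen k x (GR k)" using fe by simp
qed

lemma LP_sub: "(LPk k :: (diagram \<Rightarrow> 'a::comm_ring_1) set) \<subseteq> alg_gen k x (GL k)"
proof
  fix f :: "diagram \<Rightarrow> 'a" assume f: "f \<in> LPk k"
  have fin: "finite {d. lp_diagram k d}"
    by (rule finite_subset[OF _ finite_Mot[of k]]) (auto simp: Mot_def lp_diagram_def)
  have fe: "f = (\<lambda>e. \<Sum>d\<in>{d. lp_diagram k d}. f d * basis d e)"
    by (rule expand[OF fin]) (use f in \<open>auto simp: LPk_def supported_def\<close>)
  have "(\<lambda>e. \<Sum>d\<in>{d. lp_diagram k d}. f d * basis d e) \<in> alg_gen k x (GL k)"
    by (rule alg_sum[OF fin]) (use lp_gen in auto)
  then show "f \<in> alg_gen k x (GL k)" using fe by simp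
qed

lemma alg_RP: "alg_gen k x (GR k) \<subseteq> (RPk k :: (diagram \<Rightarrow> 'a::comm_ring_1) set)"
proof
  fix f :: "diagram \<Rightarrow> 'a" assume "f \<in> alg_gen k x (GR k)"
  then show "f \<in> RPk k"
  proof (induction rule: alg_gen.induct)
    case one then show ?case unfolding RPk_def by (rule basis_supp[of "rp_diagram k", OF idd_rp])
  next
    case (gen f)
    then show ?case unfolding GR_def RPk_def using basis_supp r_rp p_rp by blast
  next
    case (add f g) then show ?case unfolding RPk_def using supp_add by blast
  next
    case (smul f c) then show ?case unfolding RPk_def using supp_smul by blast
  next
    case (mult f g)
    show ?case unfolding RPk_def supported_def
    proof (intro CollectI allI impI)
      fix d assume "mmult k x f g d \<noteq> 0"
      then obtain d1 d2 where dd: "compose d1 d2 = d" "f d1 \<noteq> 0" "g d2 \<noteq> 0"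
        using mmult_nz by blast
      have "rp_diagram k d1" "rp_diagram k d2" using dd(2,3) mult.IH by (auto simp: RPk_def supported_def)
      then show "rp_diagram k d" using rp_compose dd(1) by blast
    qed
  qed
qed

lemma alg_LP: "alg_gen k x (GL k) \<subseteq> (LPk k :: (diagram \<Rightarrow> 'a::comm_ring_1) set)"
proof
  fix f :: "diagram \<Rightarrow> 'a" assume "f \<in> alg_gen k x (GL k)"
  then show "f \<in> LPk k"
  proof (induction rule: alg_gen.induct)
    case one then show ?case unfolding LPk_def by (rule basis_supp[of "lp_diagram k", OF idd_lp])
  next
    case (gen f)
    then show ?case unfolding GL_def LPk_def using basis_supp l_lp p_lp by blast
  next
    case (add f g) then show ?case unfolding LPk_def using supp_add by blast
  next
    case (smul f c) then show ?case unfolding LPk_def using supp_smul by blast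
  next
    case (mult f g)
    show ?case unfolding LPk_def supported_def
    proof (intro CollectI allI impI)
      fix d assume "mmult k x f g d \<noteq> 0"
      then obtain d1 d2 where dd: "compose d1 d2 = d" "f d1 \<noteq> 0" "g d2 \<noteq> 0"
        using mmult_nz by blast
      have "lp_diagram k d1" "lp_diagram k d2" using dd(2,3) mult.IH by (auto simp: LPk_def supported_def)
      then show "lp_diagram k d" using lp_compose dd(1) by blast
    qed
  qed
qed

theorem mainTheorem2:
  fixes k :: nat and x :: "'a::comm_ring_1"
  assumes "1 \<le> k"
  shows "(\<forall>d. motzkin k d \<longrightarrow>
            (\<exists>r t l. rp_diagram k r \<and> tl_diagram k t \<and> lp_diagram k l \<and>
               kappa r t = 0 \<and> kappa (compose r t) l = 0 \<and>
               compose (compose r t) l = d))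
       \<and> (Mk k :: (diagram \<Rightarrow> 'a) set) = triple_prod k x (RPk k) (TLk k) (LPk k)
       \<and> (RPk k :: (diagram \<Rightarrow> 'a) set) =
            alg_gen k x ({basis (r_diag k i) | i. 1 \<le> i \<and> i < k} \<union>
                         {basis (p_diag k j) | j. 1 \<le> j \<and> j \<le> k})
       \<and> (LPk k :: (diagram \<Rightarrow> 'a) set) =
            alg_gen k x ({basis (l_diag k i) | i. 1 \<le> i \<and> i < k} \<union>
                         {basis (p_diag k j) | j. 1 \<le> j \<and> j \<le> k})"
proof (intro conjI)
  show "\<forall>d. motzkin k d \<longrightarrow>
            (\<exists>r t l. rp_diagram k r \<and> tl_diagram k t \<and> lp_diagram k l \<and>
               kappa r t = 0 \<and> kappa (compose r t) l = 0 \<and>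
               compose (compose r t) l = d)" using decomposition by blast
  show "(Mk k :: (diagram \<Rightarrow> 'a) set) = triple_prod k x (RPk k) (TLk k) (LPk k)"
    using Mk_sub triple_sub by blast
  show "(RPk k :: (diagram \<Rightarrow> 'a) set) =
            alg_gen k x ({basis (r_diag k i) | i. 1 \<le> i \<and> i < k} \<union>
                         {basis (p_diag k j) | j. 1 \<le> j \<and> j \<le> k})"
    using RP_sub alg_RP unfolding GR_def by blast
  show "(LPk k :: (diagram \<Rightarrow> 'a) set) =
            alg_gen k x ({basis (l_diag k i) | i. 1 \<le> i \<and> i < k} \<union>
                         {basis (p_diag k j) | j. 1 \<le> j \<and> j \<le> k})"
    using LP_sub alg_LP unfolding GL_def by blast
qed


end
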